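(* For every $n\ge0$, the triples $(\mathrm{fix},\mathrm{dez},\mathrm{maz})$ and $(\mathrm{fix},\mathrm{des},\mathrm{maj})$ are equidistributed over $\mathfrak S_n$, i.e. for all integers $a,b,c$, $$\#\{\sigma\in\mathfrak S_n:(\mathrm{fix},\mathrm{dez},\mathrm{maz})\sigma=(a,b,c)\}=\#\{\sigma\in\mathfrak S_n:(\mathrm{fix},\mathrm{des},\mathrm{maj})\sigma=(a,b,c)\}.$$ Moreover, the three triples $(\mathrm{fix},\mathrm{exc},\mathrm{maz})$, $(\mathrm{fix},\mathrm{exc},\mathrm{maj})$ and $(\mathrm{fix},\mathrm{exc},\mathrm{maf})$ are equidistributed over $\mathfrak S_n$.
   Context: Permutations $\sigma\in\mathfrak S_n$ are written as words $\sigma(1)\cdots\sigma(n)$. For a word $w=x_1\cdots x_n$ of nonnegative integers: $\mathrm{DES}\,w=\{i:1\le i\le n-1,\ x_i>x_{i+1}\}$, $\mathrm{des}\,w=\#\mathrm{DES}\,w$, $\mathrm{maj}\,w=\sum_{i\in\mathrm{DES}\,w}i$; $\mathrm{Zero}\,w=\{i:x_i=0\}$, $\mathrm{zero}\,w=\#\mathrm{Zero}\,w$; $\mathrm{Pos}\,w$ is the subword of positive letters; $\mathrm{mafz}\,w=\sum_{i\in\mathrm{Zero}\,w}i-\sum_{i=1}^{\mathrm{zero}\,w}i+\mathrm{maj}\,\mathrm{Pos}\,w$. These apply to permutations as words. $\mathrm{fix}\,\sigma$ is the number of fixed points, $\mathrm{exc}\,\sigma=\#\{i:\sigma(i)>i\}$.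 $\mathrm{ZDer}(\sigma)=x_1\cdots x_n$ where $x_i=0$ if $\sigma(i)=i$ and $x_i=\mathrm{red}(\sigma(i))$ otherwise, $\mathrm{red}$ being the increasing bijection from the set of non-fixed points of $\sigma$ onto $\{1,\dots,m\}$, $m=n-\mathrm{fix}\,\sigma$. Then $\mathrm{dez}\,\sigma=\mathrm{des}\,\mathrm{ZDer}(\sigma)$, $\mathrm{maz}\,\sigma=\mathrm{maj}\,\mathrm{ZDer}(\sigma)$, $\mathrm{maf}\,\sigma=\mathrm{mafz}\,\mathrm{ZDer}(\sigma)$. *)

theory Defs
  imports "HOL-Combinatorics.Permutations"
begin

text \<open>Words are lists of natural numbers; positions are 1-indexed as in the paper,
  so the letter at position i of w is w ! (i - 1).\<close>

definition DES :: "nat list \<Rightarrow> nat set" where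
  "DES w = {i. 1 \<le> i \<and> i \<le> length w - 1 \<and> w ! (i - 1) > w ! i}"

definition des :: "nat list \<Rightarrow> nat" where
  "des w = card (DES w)"

definition maj :: "nat list \<Rightarrow> nat" where
  "maj w = (\<Sum>i\<in>DES w. i)"

definition Zero :: "nat list \<Rightarrow> nat set" where
  "Zero w = {i. 1 \<le> i \<and> i \<le> length w \<and> w ! (i - 1) = 0}"

definition zero :: "nat list \<Rightarrow> nat" where
  "zero w = card (Zero w)"

definition Pos :: "nat list \<Rightarrow> nat list" where
  "Pos w = filter (\<lambda>x. x > 0) w"

definition mafz :: "nat list \<Rightarrow> nat" where
  "mafz w = (\<Sum>i\<in>Zero w. i) - (\<Sum>i=1..zero w. i) + maj (Pos w)"

definition pword :: "nat \<Rightarrow> (nat \<Rightarrow> nat) \<Rightarrow> nat list" where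
  "pword n \<sigma> = map \<sigma> [1..<n+1]"

definition fix_pts :: "nat \<Rightarrow> (nat \<Rightarrow> nat) \<Rightarrow> nat" where
  "fix_pts n \<sigma> = card {i \<in> {1..n}. \<sigma> i = i}"

definition exc :: "nat \<Rightarrow> (nat \<Rightarrow> nat) \<Rightarrow> nat" where
  "exc n \<sigma> = card {i \<in> {1..n}. \<sigma> i > i}"

text \<open>red: increasing bijection from the non-fixed points onto {1..m}.\<close>
definition red :: "nat \<Rightarrow> (nat \<Rightarrow> nat) \<Rightarrow> nat \<Rightarrow> nat" where
  "red n \<sigma> k = card {j \<in> {1..n}. \<sigma> j \<noteq> j \<and> j \<le> k}"

definition ZDer :: "nat \<Rightarrow> (nat \<Rightarrow> nat) \<Rightarrow> nat list" where
  "ZDer n \<sigma> = map (\<lambda>i. if \<sigma> i = i then 0 else red n \<sigma> (\<sigma> i)) [1..<n+1]"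

definition dez :: "nat \<Rightarrow> (nat \<Rightarrow> nat) \<Rightarrow> nat" where
  "dez n \<sigma> = des (ZDer n \<sigma>)"

definition maz :: "nat \<Rightarrow> (nat \<Rightarrow> nat) \<Rightarrow> nat" where
  "maz n \<sigma> = maj (ZDer n \<sigma>)"

definition maf :: "nat \<Rightarrow> (nat \<Rightarrow> nat) \<Rightarrow> nat" where
  "maf n \<sigma> = mafz (ZDer n \<sigma>)"

end

theory Submission
  imports Defs
begin

definition DESR :: "(nat \<Rightarrow> nat \<Rightarrow> bool) \<Rightarrow> nat list \<Rightarrow> nat set" where
  "DESR R w = {i. 1 \<le> i \<and> i \<le> length w - 1 \<and> R (w ! (i - 1)) (w ! i)}"

lemma DES_DESR: "DES w = DESR (\<lambda>x y. y < x) w"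
  unfolding DES_def DESR_def by simp

lemma DESR_subset: "DESR R w \<subseteq> {1..length w - 1}"
  unfolding DESR_def by auto

lemma finite_DESR[simp]: "finite (DESR R w)"
  using DESR_subset finite_subset by blast

lemma DESR_snoc:
  "DESR R (w @ [x]) = DESR R w \<union> (if w \<noteq> [] \<and> R (last w) x then {length w} else {})"
proof (rule set_eqI)
  fix i
  show "i \<in> DESR R (w @ [x]) \<longleftrightarrow> i \<in> DESR R w \<union> (if w \<noteq> [] \<and> R (last w) x then {length w} else {})"
  proof (cases "i < length w")
    case True
    then show ?thesis unfolding DESR_def
      by (auto simp: nth_append)
  next
    case False
    show ?thesis
    proof (cases "i = length w")
      case True
      show ?thesis
      proof (cases "w = []")
        case True then show ?thesis unfolding DESR_def by auto
      next
        case False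
        then have "(w @ [x]) ! (i - 1) = last w" using \<open>i = length w\<close>
          by (simp add: nth_append last_conv_nth)
        moreover have "(w @ [x]) ! i = x" using \<open>i = length w\<close> by simp
        moreover have "1 \<le> length w" using False by (cases w) auto
        ultimately show ?thesis using \<open>i = length w\<close> False unfolding DESR_def by auto
      qed
    next
      case False
      then show ?thesis using \<open>\<not> i < length w\<close> unfolding DESR_def by auto
    qed
  qed
qed

lemma maj_snoc:
  "maj (w @ [x]) = maj w + (if w \<noteq> [] \<and> x < last w then length w else 0)"
proof -
  have "length w \<notin> DES w" unfolding DES_DESR DESR_def by auto
  then show ?thesis unfolding maj_def
    by (auto simp: DES_DESR DESR_snoc)
qed

lemma Pos_append[simp]: "Pos (xs @ ys) = Pos xs @ Pos ys"
  unfolding Pos_def by simp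

lemma Pos_Cons: "Pos (x # xs) = (if 0 < x then x # Pos xs else Pos xs)"
  unfolding Pos_def by simp

lemma Pos_Nil[simp]: "Pos [] = []" unfolding Pos_def by simp

lemma Pos_single[simp]: "Pos [x] = (if 0 < x then [x] else [])"
  unfolding Pos_def by simp

lemma Zero_eq: "Zero w = Suc ` {i. i < length w \<and> w ! i = 0}"
proof (rule set_eqI)
  fix i show "i \<in> Zero w \<longleftrightarrow> i \<in> Suc ` {i. i < length w \<and> w ! i = 0}"
    unfolding Zero_def by (cases i) auto
qed

lemma zero_len: "zero w = length (filter (\<lambda>x. x = 0) w)"
  unfolding zero_def Zero_eq by (simp add: card_image length_filter_conv_card)

lemma zero_plus_Pos: "zero w + length (Pos w) = length w"
proof -
  have "length (filter (\<lambda>x. x = 0) w) + length (filter (\<lambda>x. \<not> x = 0) w) = length w"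
    by (rule sum_length_filter_compl)
  then show ?thesis unfolding zero_len Pos_def by simp
qed

lemma Zero_snoc: "Zero (w @ [x]) = (if x = 0 then insert (Suc (length w)) (Zero w) else Zero w)"
  unfolding Zero_def by (auto simp: nth_append)

lemma finite_Zero[simp]: "finite (Zero w)" unfolding Zero_def by auto

lemma Zero_le: "i \<in> Zero w \<Longrightarrow> i \<le> length w" unfolding Zero_def by auto

lemma sum_Zero_ge: "(\<Sum>i=1..zero w. i) \<le> (\<Sum>i\<in>Zero w. i)"
proof (induction w rule: rev_induct)
  case Nil
  then show ?case by (simp add: zero_def Zero_def)
next
  case (snoc x w)
  show ?case
  proof (cases "x = 0")
    case True
    have nz: "Suc (length w) \<notin> Zero w" using Zero_le by force
    have z: "zero (w @ [x]) = Suc (zero w)" using True nz unfolding zero_def Zero_snoc by simp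
    have "zero w \<le> length w" using zero_plus_Pos[of w] by simp
    then have "(\<Sum>i=1..zero (w @ [x]). i) = (\<Sum>i=1..zero w. i) + Suc (zero w)" using z by simp
    also have "\<dots> \<le> (\<Sum>i\<in>Zero w. i) + Suc (length w)" using snoc \<open>zero w \<le> length w\<close> by simp
    also have "\<dots> = (\<Sum>i\<in>Zero (w@[x]). i)" using True nz unfolding Zero_snoc by simp
    finally show ?thesis .
  next
    case False
    then show ?thesis using snoc unfolding zero_def Zero_snoc by simp
  qed
qed

lemma mafz_snoc0: "mafz (w @ [0]) = mafz w + length (Pos w)"
proof -
  have nz: "Suc (length w) \<notin> Zero w" using Zero_le by force
  have z: "zero (w @ [0]) = Suc (zero w)" using nz unfolding zero_def Zero_snoc by simp
  have le: "zero w \<le> length w" using zero_plus_Pos[of w] by simp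
  have s: "(\<Sum>i\<in>Zero (w@[0]). i) = (\<Sum>i\<in>Zero w. i) + Suc (length w)"
    using nz unfolding Zero_snoc by simp
  have "length (Pos w) = length w - zero w" using zero_plus_Pos[of w] by simp
  then show ?thesis unfolding mafz_def using z s le sum_Zero_ge[of w] by simp
qed

lemma mafz_snoc: "0 < x \<Longrightarrow> mafz (w @ [x]) = mafz w + (if Pos w \<noteq> [] \<and> x < last (Pos w) then length (Pos w) else 0)"
proof -
  assume x: "0 < x"
  have z: "Zero (w @ [x]) = Zero w" using x unfolding Zero_snoc by simp
  then have zz: "zero (w @ [x]) = zero w" unfolding zero_def by simp
  show ?thesis unfolding mafz_def z zz using x sum_Zero_ge[of w] by (simp add: maj_snoc)
qed

fun gauss :: "nat \<Rightarrow> nat \<Rightarrow> nat multiset" where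
  "gauss n 0 = {#0#}"
| "gauss 0 (Suc k) = {#}"
| "gauss (Suc n) (Suc k) = gauss n (Suc k) + image_mset (\<lambda>x. x + (n - k)) (gauss n k)"

definition sh :: "nat \<Rightarrow> nat multiset \<Rightarrow> nat multiset" where
  "sh c M = image_mset (\<lambda>x. x + c) M"

lemma sh_0[simp]: "sh 0 M = M" unfolding sh_def by simp
lemma sh_sh[simp]: "sh a (sh b M) = sh (b + a) M" unfolding sh_def by (simp add: multiset.map_comp comp_def add.assoc)
lemma sh_plus[simp]: "sh c (M + N) = sh c M + sh c N" unfolding sh_def by simp
lemma sh_empty[simp]: "sh c {#} = {#}" unfolding sh_def by simp
lemma sh_add_mset[simp]: "sh c (add_mset x M) = add_mset (x + c) (sh c M)" unfolding sh_def by simp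
lemma sh_single[simp]: "sh c {#x#} = {#x + c#}" unfolding sh_def by simp

lemma gauss_Suc_Suc: "gauss (Suc n) (Suc k) = gauss n (Suc k) + sh (n - k) (gauss n k)"
  unfolding sh_def by simp

lemma gauss_empty: "n < k \<Longrightarrow> gauss n k = {#}"
proof (induction n arbitrary: k)
  case 0 then show ?case by (cases k) auto
next
  case (Suc n)
  then obtain k' where "k = Suc k'" by (cases k) auto
  then show ?case using Suc by simp
qed

lemma gauss_nn[simp]: "gauss n n = {#0#}"
proof (induction n)
  case 0 then show ?case by simp
next
  case (Suc n)
  then show ?case using gauss_empty[of n "Suc n"] by simp
qed

lemma gauss_P2: "gauss (Suc n) (Suc k) = sh (Suc k) (gauss n (Suc k)) + gauss n k"
proof (induction n arbitrary: k)
  case 0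
  then show ?case by (cases k) (auto simp: sh_def)
next
  case (Suc n)
  note IH = Suc.IH
  show ?case
  proof (cases k)
    case 0
    have a: "gauss (Suc n) (Suc 0) = sh 1 (gauss n (Suc 0)) + {#0#}" using IH[of 0] by simp
    have b: "gauss (Suc n) (Suc 0) = gauss n (Suc 0) + {#n#}" by (simp add: sh_def)
    have "gauss (Suc (Suc n)) (Suc k) = gauss (Suc n) (Suc 0) + {#Suc n#}" using 0 by (simp add: sh_def)
    also have "\<dots> = sh (Suc 0) (gauss (Suc n) (Suc 0)) + {#0#}"
    proof -
      have c: "sh (Suc 0) (gauss (Suc n) (Suc 0)) = sh 1 (gauss n (Suc 0)) + {#Suc n#}"
        unfolding b by (simp add: sh_def)
      show ?thesis unfolding c unfolding a by simp
    qed
    finally show ?thesis by (simp only: 0 gauss.simps(1))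
  next
    case (Suc k')
    show ?thesis
    proof (cases "k' \<le> n")
      case True
      have d1: "gauss (Suc n) (Suc k') = gauss n (Suc k') + sh (n - k') (gauss n k')"
        by (rule gauss_Suc_Suc)
      have i1: "gauss (Suc n) (Suc k') = sh (Suc k') (gauss n (Suc k')) + gauss n k'"
        by (rule IH)
      have i2: "gauss (Suc n) (Suc k) = sh (Suc k) (gauss n (Suc k)) + gauss n k"
        by (rule IH)
      have d2: "gauss (Suc n) (Suc k) = gauss n (Suc k) + sh (n - k) (gauss n k)"
        by (rule gauss_Suc_Suc)
      have key: "sh (n - k') (gauss n k) + sh (2 * (n - k')) (gauss n k') =
                 sh (Suc n) (gauss n k) + sh (n - k') (gauss n k')"
      proof -
        have "sh (n - k') (gauss n (Suc k') + sh (n - k') (gauss n k')) =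
              sh (n - k') (sh (Suc k') (gauss n (Suc k')) + gauss n k')"
          using d1 i1 by simp
        moreover have "Suc k' + (n - k') = Suc n" using True by simp
        ultimately show ?thesis using Suc by (simp add: mult_2)
      qed
      have "gauss (Suc (Suc n)) (Suc k) = gauss (Suc n) (Suc k) + sh (n - k') (gauss (Suc n) k)"
        using Suc gauss_Suc_Suc[of "Suc n" k] by simp
      also have "\<dots> = sh (Suc k) (gauss n (Suc k)) + gauss n k
                      + sh (n - k') (gauss n k) + sh (2 * (n - k')) (gauss n k')"
        using i2 Suc d1 by (simp add: mult_2)
      also have "\<dots> = sh (Suc k) (gauss n (Suc k)) + gauss n k
                      + sh (Suc n) (gauss n k) + sh (n - k') (gauss n k')"
        using key by (simp add: add.assoc)
      also have "\<dots> = sh (Suc k) (gauss (Suc n) (Suc k)) + gauss (Suc n) k"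
      proof -
        have "sh (Suc n) (gauss n k) = sh (Suc k) (sh (n - k) (gauss n k))"
        proof (cases "k \<le> n")
          case True
          then have "n - k + Suc k = Suc n" by simp
          then show ?thesis by simp
        next
          case False
          then show ?thesis using gauss_empty[of n k] by simp
        qed
        then show ?thesis using d2 d1 Suc by (simp add: add_ac)
      qed
      finally show ?thesis .
    next
      case False
      then have e1: "gauss n k = {#}" "gauss n (Suc k) = {#}" "gauss n k' = {#}"
        using gauss_empty Suc by auto
      have e2: "gauss (Suc n) (Suc k) = {#}" using gauss_empty False Suc by auto
      have e3: "gauss (Suc n) k = {#}" "gauss (Suc (Suc n)) (Suc k) = {#}"
        using gauss_empty False Suc by auto
      show ?thesis using e1 e2 e3 by simp
    qed
  qed
qed

definition W :: "nat list \<Rightarrow> nat \<Rightarrow> nat list set" where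
  "W v n = {w. length w = n \<and> Pos w = v}"

definition MS :: "(nat list \<Rightarrow> nat) \<Rightarrow> nat list set \<Rightarrow> nat multiset" where
  "MS f S = image_mset f (mset_set S)"

lemma set_Pos: "set (Pos w) = {x \<in> set w. 0 < x}" unfolding Pos_def by auto

lemma finite_W[simp]: "finite (W v n)"
proof -
  have "W v n \<subseteq> {w. set w \<subseteq> insert 0 (set v) \<and> length w = n}"
    unfolding W_def using set_Pos by fastforce
  moreover have "finite {w. set w \<subseteq> insert 0 (set v) \<and> length w = n}"
    by (rule finite_lists_length_eq) simp
  ultimately show ?thesis using finite_subset by blast
qed

lemma W_0: "W v 0 = (if v = [] then {[]} else {})"
  unfolding W_def by auto

lemma W_Suc: "W v (Suc n) = (\<lambda>w. w @ [0]) ` W v n \<union>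
   (if v \<noteq> [] \<and> 0 < last v then (\<lambda>w. w @ [last v]) ` W (butlast v) n else {})"
proof (rule set_eqI)
  fix w
  show "w \<in> W v (Suc n) \<longleftrightarrow> w \<in> (\<lambda>w. w @ [0]) ` W v n \<union>
   (if v \<noteq> [] \<and> 0 < last v then (\<lambda>w. w @ [last v]) ` W (butlast v) n else {})"
  proof
    assume "w \<in> W v (Suc n)"
    then have l: "length w = Suc n" and p: "Pos w = v" unfolding W_def by auto
    then obtain w' x where w: "w = w' @ [x]" by (metis length_Suc_conv_rev)
    show "w \<in> (\<lambda>w. w @ [0]) ` W v n \<union>
   (if v \<noteq> [] \<and> 0 < last v then (\<lambda>w. w @ [last v]) ` W (butlast v) n else {})"
    proof (cases "x = 0")
      case True
      then have "w' \<in> W v n" using l p w unfolding W_def by auto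
      then show ?thesis using w True by auto
    next
      case False
      then have "v = Pos w' @ [x]" using p w by simp
      then have "v \<noteq> [] \<and> 0 < last v \<and> w' \<in> W (butlast v) n \<and> x = last v"
        using l w False unfolding W_def by auto
      then show ?thesis using w by auto
    qed
  next
    assume "w \<in> (\<lambda>w. w @ [0]) ` W v n \<union>
   (if v \<noteq> [] \<and> 0 < last v then (\<lambda>w. w @ [last v]) ` W (butlast v) n else {})"
    then show "w \<in> W v (Suc n)" unfolding W_def
      by (auto split: if_splits)
  qed
qed

lemma MS_union: "finite A \<Longrightarrow> finite B \<Longrightarrow> A \<inter> B = {} \<Longrightarrow> MS f (A \<union> B) = MS f A + MS f B"
  unfolding MS_def by (simp add: mset_set_Union)

lemma MS_image: "inj_on g A \<Longrightarrow> MS f (g ` A) = MS (f \<circ> g) A"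
  unfolding MS_def by (simp add: image_mset_mset_set[symmetric] multiset.map_comp)

lemma MS_cong: "(\<And>x. x \<in> A \<Longrightarrow> f x = g x) \<Longrightarrow> MS f A = MS g A"
  unfolding MS_def
  by (cases "finite A") (auto intro!: image_mset_cong)

lemma MS_split: "finite A \<Longrightarrow> MS f A = MS f {x\<in>A. P x} + MS f {x\<in>A. \<not> P x}"
proof -
  assume "finite A"
  have "A = {x\<in>A. P x} \<union> {x\<in>A. \<not> P x}" by auto
  then have "MS f A = MS f ({x\<in>A. P x} \<union> {x\<in>A. \<not> P x})" by simp
  also have "\<dots> = MS f {x\<in>A. P x} + MS f {x\<in>A. \<not> P x}"
    using \<open>finite A\<close> by (intro MS_union) auto
  finally show ?thesis .
qed

lemma MS_empty[simp]: "MS f {} = {#}" unfolding MS_def by simp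
lemma MS_single[simp]: "MS f {x} = {#f x#}" unfolding MS_def by simp

lemma MS_shift: "MS (\<lambda>x. f x + c) A = sh c (MS f A)"
  unfolding MS_def sh_def by (simp add: multiset.map_comp comp_def)

lemma inj_snoc: "inj_on (\<lambda>w. w @ [x]) A" by (auto intro: inj_onI)

lemma T_rec: "MS mafz (W v (Suc n)) = sh (length v) (MS mafz (W v n)) +
   (if v \<noteq> [] \<and> 0 < last v then
      sh (if butlast v \<noteq> [] \<and> last v < last (butlast v) then length (butlast v) else 0)
         (MS mafz (W (butlast v) n)) else {#})"
proof -
  have d: "(\<lambda>w. w @ [0]) ` W v n \<inter> (if v \<noteq> [] \<and> 0 < last v then (\<lambda>w. w @ [last v]) ` W (butlast v) n else {}) = {}"
    by auto
  have "MS mafz (W v (Suc n)) = MS mafz ((\<lambda>w. w @ [0]) ` W v n) +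
      MS mafz (if v \<noteq> [] \<and> 0 < last v then (\<lambda>w. w @ [last v]) ` W (butlast v) n else {})"
    unfolding W_Suc using d by (intro MS_union) auto
  also have "MS mafz ((\<lambda>w. w @ [0]) ` W v n) = sh (length v) (MS mafz (W v n))"
  proof -
    have "MS mafz ((\<lambda>w. w @ [0]) ` W v n) = MS (\<lambda>w. mafz w + length v) (W v n)"
      unfolding MS_image[OF inj_snoc] by (rule MS_cong) (simp add: mafz_snoc0 W_def)
    then show ?thesis by (simp add: MS_shift)
  qed
  also have "MS mafz (if v \<noteq> [] \<and> 0 < last v then (\<lambda>w. w @ [last v]) ` W (butlast v) n else {}) =
     (if v \<noteq> [] \<and> 0 < last v then
      sh (if butlast v \<noteq> [] \<and> last v < last (butlast v) then length (butlast v) else 0)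
         (MS mafz (W (butlast v) n)) else {#})"
  proof (cases "v \<noteq> [] \<and> 0 < last v")
    case True
    have "MS mafz ((\<lambda>w. w @ [last v]) ` W (butlast v) n) =
      MS (\<lambda>w. mafz w + (if butlast v \<noteq> [] \<and> last v < last (butlast v) then length (butlast v) else 0)) (W (butlast v) n)"
      unfolding MS_image[OF inj_snoc] by (rule MS_cong) (use True in \<open>simp add: mafz_snoc W_def\<close>)
    then show ?thesis using True by (simp add: MS_shift)
  next
    case False
    show ?thesis by (simp only: False if_False MS_empty)
  qed
  finally show ?thesis .
qed

lemma maj_Nil[simp]: "maj [] = 0" unfolding maj_def DES_def by simp
lemma mafz_Nil[simp]: "mafz [] = 0" unfolding mafz_def maj_def DES_def Zero_def zero_def Pos_def by simp

lemma maj_butlast: "v \<noteq> [] \<Longrightarrow> maj v = maj (butlast v) +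
    (if butlast v \<noteq> [] \<and> last v < last (butlast v) then length (butlast v) else 0)"
  using maj_snoc[of "butlast v" "last v"] by simp

lemma T_closed: "\<forall>x\<in>set v. 0 < x \<Longrightarrow>
   MS mafz (W v n) = (if length v \<le> n then sh (maj v) (gauss n (n - length v)) else {#})"
proof (induction n arbitrary: v)
  case 0
  then show ?case by (simp add: W_0)
next
  case (Suc n)
  show ?case
  proof (cases "v = []")
    case True
    then show ?thesis using Suc.IH[of "[]"] unfolding T_rec by simp
  next
    case False
    let ?v' = "butlast v" let ?y = "last v"
    let ?c = "(if ?v' \<noteq> [] \<and> ?y < last ?v' then length ?v' else 0)"
    have y: "0 < ?y" using Suc.prems False by simp
    have pv': "\<forall>x\<in>set ?v'. 0 < x" using Suc.prems by (meson in_set_butlastD)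
    have mj: "maj v = maj ?v' + ?c" using maj_butlast[OF False] .
    have lv': "length ?v' = length v - 1" by simp
    have rec: "MS mafz (W v (Suc n)) = sh (length v) (MS mafz (W v n)) + sh ?c (MS mafz (W ?v' n))"
      unfolding T_rec using False y by simp
    have IH1: "MS mafz (W v n) = (if length v \<le> n then sh (maj v) (gauss n (n - length v)) else {#})"
      using Suc.IH Suc.prems by blast
    have IH2: "MS mafz (W ?v' n) = (if length ?v' \<le> n then sh (maj ?v') (gauss n (n - length ?v')) else {#})"
      using Suc.IH pv' by blast
    have lpos: "length v \<ge> 1" using False by (cases v) auto
    consider "length v \<le> n" | "length v = Suc n" | "length v > Suc n" by linarith
    then show ?thesis
    proof cases
      case 1
      define k where "k = n - length v"
      have nk: "n - length ?v' = Suc k" using 1 lpos unfolding k_def by simp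
      have "MS mafz (W v (Suc n)) = sh (length v) (sh (maj v) (gauss n k)) + sh ?c (sh (maj ?v') (gauss n (Suc k)))"
      proof -
        have e1: "MS mafz (W v n) = sh (maj v) (gauss n k)" using IH1 1 k_def by simp
        have "length ?v' \<le> n" using 1 by simp
        then have e2: "MS mafz (W ?v' n) = sh (maj ?v') (gauss n (Suc k))" using IH2 nk by simp
        show ?thesis unfolding rec e1 e2 ..
      qed
      also have "\<dots> = sh (maj v) (gauss n (Suc k) + sh (n - k) (gauss n k))"
        using 1 mj unfolding k_def by (simp add: add_ac)
      also have "\<dots> = sh (maj v) (gauss (Suc n) (Suc n - length v))"
        using 1 unfolding k_def gauss_Suc_Suc[symmetric] by (simp add: Suc_diff_le)
      finally show ?thesis using 1 by simp
    next
      case 2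
      have "MS mafz (W v (Suc n)) = sh ?c (sh (maj ?v') (gauss n 0))"
        unfolding rec IH1 IH2 using 2 by simp
      then show ?thesis using 2 mj by simp
    next
      case 3
      then show ?thesis unfolding rec IH1 IH2 by simp
    qed
  qed
qed

definition Mlast :: "nat list \<Rightarrow> nat \<Rightarrow> nat multiset" where
  "Mlast v n = MS maj {w\<in>W v n. w \<noteq> [] \<and> last w \<noteq> 0}"
definition Mzero :: "nat list \<Rightarrow> nat \<Rightarrow> nat multiset" where
  "Mzero v n = MS maj {w\<in>W v n. \<not> (w \<noteq> [] \<and> last w \<noteq> 0)}"

lemma last_Pos: "w \<noteq> [] \<Longrightarrow> last w \<noteq> 0 \<Longrightarrow> Pos w \<noteq> [] \<and> last (Pos w) = last w"
  by (induction w rule: rev_induct) auto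

lemma W0_Suc: "{w\<in>W v (Suc n). \<not> (w \<noteq> [] \<and> last w \<noteq> 0)} = (\<lambda>w. w @ [0]) ` W v n"
  unfolding W_Suc by (auto split: if_splits)

lemma WL_Suc: "{w\<in>W v (Suc n). w \<noteq> [] \<and> last w \<noteq> 0} =
   (if v \<noteq> [] \<and> 0 < last v then (\<lambda>w. w @ [last v]) ` W (butlast v) n else {})"
  unfolding W_Suc by (auto split: if_splits)

lemma MS_W_split: "MS maj (W v n) = Mlast v n + Mzero v n"
  unfolding Mlast_def Mzero_def by (rule MS_split) simp

lemma Mzero_rec: "Mzero v (Suc n) = sh n (Mlast v n) + Mzero v n"
proof -
  have "Mzero v (Suc n) = MS (\<lambda>w. maj (w @ [0])) (W v n)"
    unfolding Mzero_def W0_Suc MS_image[OF inj_snoc] by (simp add: comp_def)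
  also have "\<dots> = MS (\<lambda>w. maj (w @ [0])) {w\<in>W v n. w \<noteq> [] \<and> last w \<noteq> 0}
       + MS (\<lambda>w. maj (w @ [0])) {w\<in>W v n. \<not> (w \<noteq> [] \<and> last w \<noteq> 0)}"
    by (rule MS_split) simp
  also have "MS (\<lambda>w. maj (w @ [0])) {w\<in>W v n. w \<noteq> [] \<and> last w \<noteq> 0} = MS (\<lambda>w. maj w + n) {w\<in>W v n. w \<noteq> [] \<and> last w \<noteq> 0}"
    by (rule MS_cong) (auto simp: maj_snoc W_def)
  also have "MS (\<lambda>w. maj (w @ [0])) {w\<in>W v n. \<not> (w \<noteq> [] \<and> last w \<noteq> 0)} = MS maj {w\<in>W v n. \<not> (w \<noteq> [] \<and> last w \<noteq> 0)}"
    by (rule MS_cong) (auto simp: maj_snoc W_def)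
  finally show ?thesis unfolding Mlast_def Mzero_def MS_shift .
qed

lemma Mlast_rec: "v \<noteq> [] \<Longrightarrow> 0 < last v \<Longrightarrow>
  Mlast v (Suc n) = sh (if butlast v \<noteq> [] \<and> last v < last (butlast v) then n else 0) (Mlast (butlast v) n) + Mzero (butlast v) n"
proof -
  assume v: "v \<noteq> []" "0 < last v"
  let ?v' = "butlast v" let ?y = "last v"
  let ?c = "(if butlast v \<noteq> [] \<and> last v < last (butlast v) then n else 0)"
  have "Mlast v (Suc n) = MS (\<lambda>w. maj (w @ [?y])) (W ?v' n)"
    using v unfolding Mlast_def WL_Suc by (simp add: MS_image[OF inj_snoc] comp_def)
  also have "\<dots> = MS (\<lambda>w. maj (w @ [?y])) {w\<in>W ?v' n. w \<noteq> [] \<and> last w \<noteq> 0}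
       + MS (\<lambda>w. maj (w @ [?y])) {w\<in>W ?v' n. \<not> (w \<noteq> [] \<and> last w \<noteq> 0)}"
    by (rule MS_split) simp
  also have "MS (\<lambda>w. maj (w @ [?y])) {w\<in>W ?v' n. w \<noteq> [] \<and> last w \<noteq> 0} = MS (\<lambda>w. maj w + ?c) {w\<in>W ?v' n. w \<noteq> [] \<and> last w \<noteq> 0}"
  proof (rule MS_cong)
    fix w assume w: "w \<in> {w\<in>W ?v' n. w \<noteq> [] \<and> last w \<noteq> 0}"
    then have "Pos w = ?v'" "length w = n" unfolding W_def by auto
    then have "?v' \<noteq> [] \<and> last ?v' = last w" using last_Pos[of w] w by auto
    then show "maj (w @ [?y]) = maj w + ?c" using w \<open>length w = n\<close> by (simp add: maj_snoc)
  qed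
  also have "MS (\<lambda>w. maj (w @ [?y])) {w\<in>W ?v' n. \<not> (w \<noteq> [] \<and> last w \<noteq> 0)} = MS maj {w\<in>W ?v' n. \<not> (w \<noteq> [] \<and> last w \<noteq> 0)}"
    by (rule MS_cong) (auto simp: maj_snoc)
  finally show ?thesis unfolding Mlast_def Mzero_def MS_shift .
qed

lemma Mlast_Nil: "Mlast [] n = {#}"
proof -
  have "{w\<in>W [] n. w \<noteq> [] \<and> last w \<noteq> 0} = {}"
  proof (rule ccontr)
    assume "{w\<in>W [] n. w \<noteq> [] \<and> last w \<noteq> 0} \<noteq> {}"
    then obtain w where "w \<in> W [] n" "w \<noteq> []" "last w \<noteq> 0" by blast
    then show False using last_Pos[of w] unfolding W_def by auto
  qed
  then show ?thesis unfolding Mlast_def by (simp only: MS_empty)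
qed

lemma W_Nil: "W [] n = {replicate n 0}"
proof (rule set_eqI)
  fix w
  have "Pos w = [] \<longleftrightarrow> (\<forall>x\<in>set w. x = 0)" unfolding Pos_def by (auto simp: filter_empty_conv)
  then show "w \<in> W [] n \<longleftrightarrow> w \<in> {replicate n 0}"
    unfolding W_def by (auto intro: replicate_eqI)
qed

lemma Mzero_Nil: "Mzero [] n = {#0#}"
proof -
  have "{w\<in>W [] n. \<not> (w \<noteq> [] \<and> last w \<noteq> 0)} = {replicate n 0}"
  proof -
    show ?thesis unfolding W_Nil by auto (metis last_replicate less_irrefl)
  qed
  moreover have "maj (replicate n 0) = 0" unfolding maj_def DES_def by auto
  ultimately show ?thesis unfolding Mzero_def by simp
qed

lemma LZ_closed: "\<forall>x\<in>set v. 0 < x \<Longrightarrow>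
   Mlast v n = (if v \<noteq> [] \<and> length v \<le> n then sh (maj v) (gauss (n - 1) (n - length v)) else {#}) \<and>
   Mzero v n = (if v = [] then {#0#} else if length v < n then sh (maj v + length v) (gauss (n - 1) (n - length v - 1)) else {#})"
proof (induction n arbitrary: v)
  case 0
  show ?case
  proof (cases "v = []")
    case True then show ?thesis by (simp add: Mlast_Nil Mzero_Nil)
  next
    case False
    then show ?thesis unfolding Mlast_def Mzero_def by (simp add: W_0)
  qed
next
  case (Suc n)
  have IHv: "Mlast v n = (if v \<noteq> [] \<and> length v \<le> n then sh (maj v) (gauss (n - 1) (n - length v)) else {#})"
            "Mzero v n = (if v = [] then {#0#} else if length v < n then sh (maj v + length v) (gauss (n - 1) (n - length v - 1)) else {#})"
    using Suc.IH Suc.prems by blast+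
  show ?case
  proof (cases "v = []")
    case True
    then show ?thesis by (simp add: Mlast_Nil Mzero_Nil)
  next
    case False
    let ?m = "length v"
    have m1: "?m \<ge> 1" using False by (cases v) auto
    have Z: "Mzero v (Suc n) = (if ?m < Suc n then sh (maj v + ?m) (gauss n (Suc n - ?m - 1)) else {#})"
    proof -
      have r: "Mzero v (Suc n) = sh n (Mlast v n) + Mzero v n" by (rule Mzero_rec)
      consider "?m = n" | "?m < n" | "?m > n" by linarith
      then show ?thesis
      proof cases
        case 1
        then show ?thesis unfolding r IHv using False by simp
      next
        case 2
        then obtain N K where N: "n = Suc N" and K: "n - ?m = Suc K" by (metis Suc_diff_Suc less_imp_Suc_add)
        have e1: "Mlast v n = sh (maj v) (gauss N (Suc K))" using IHv(1) False 2 N K by simp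
        have KK: "N - ?m = K" using K 2 N by simp
        have e2': "Mzero v n = sh (maj v + ?m) (gauss N (N - ?m))" using IHv(2) False 2 N by simp
        have e2: "Mzero v n = sh (maj v + ?m) (gauss N K)" unfolding e2' KK ..
        have "gauss n (Suc n - ?m - 1) = gauss (Suc N) (Suc K)" using N K by simp
        also have "\<dots> = sh (Suc K) (gauss N (Suc K)) + gauss N K" by (rule gauss_P2)
        finally have g: "gauss n (Suc n - ?m - 1) = sh (Suc K) (gauss N (Suc K)) + gauss N K" .
        have s1: "sh n (sh (maj v) (gauss N (Suc K))) = sh (maj v + ?m) (sh (Suc K) (gauss N (Suc K)))"
          unfolding sh_sh by (rule arg_cong[of _ _ "\<lambda>c. sh c (gauss N (Suc K))"]) (use K 2 in simp)
        show ?thesis unfolding r e1 e2 g s1 using 2 by simp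
      next
        case 3
        then show ?thesis unfolding r IHv using False by simp
      qed
    qed
    have L: "Mlast v (Suc n) = (if ?m \<le> Suc n then sh (maj v) (gauss n (Suc n - ?m)) else {#})"
    proof -
      let ?v' = "butlast v" let ?y = "last v"
      have y: "0 < ?y" using Suc.prems False by simp
      have pv': "\<forall>x\<in>set ?v'. 0 < x" using Suc.prems by (meson in_set_butlastD)
      have IH': "Mlast ?v' n = (if ?v' \<noteq> [] \<and> length ?v' \<le> n then sh (maj ?v') (gauss (n - 1) (n - length ?v')) else {#})"
            "Mzero ?v' n = (if ?v' = [] then {#0#} else if length ?v' < n then sh (maj ?v' + length ?v') (gauss (n - 1) (n - length ?v' - 1)) else {#})"
        using Suc.IH pv' by blast+
      have r: "Mlast v (Suc n) = sh (if ?v' \<noteq> [] \<and> ?y < last ?v' then n else 0) (Mlast ?v' n) + Mzero ?v' n"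
        using Mlast_rec[OF False y] .
      have mj: "maj v = maj ?v' + (if ?v' \<noteq> [] \<and> ?y < last ?v' then length ?v' else 0)"
        using maj_butlast[OF False] .
      show ?thesis
      proof (cases "?v' = []")
        case True
        then have "?m = 1" using False by (cases v) (auto split: if_splits)
        then show ?thesis unfolding r using True mj by (simp add: Mlast_Nil Mzero_Nil)
      next
        case False2: False
        have lv': "length ?v' = ?m - 1" by simp
        consider "length ?v' = n" | "length ?v' < n" | "length ?v' > n" by linarith
        then show ?thesis
        proof cases
          case 1
          then have "?m = Suc n" using m1 by simp
          then show ?thesis unfolding r IH' using False2 1 mj by simp
        next
          case 2
          then obtain N K where N: "n = Suc N" and K: "n - length ?v' = Suc K" by (metis Suc_diff_Suc less_imp_Suc_add)
          have e1: "Mlast ?v' n = sh (maj ?v') (gauss N (Suc K))" using IH'(1) False2 2 N K by simp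
          have e2: "Mzero ?v' n = sh (maj ?v' + length ?v') (gauss N K)" using IH'(2) False2 2 N K by simp
          have sm: "Suc n - ?m = Suc K" using K m1 by simp
          have mle: "?m \<le> Suc n" using 2 by simp
          show ?thesis
          proof (cases "?y < last ?v'")
            case True
            have gn: "gauss n (Suc n - ?m) = sh (Suc K) (gauss N (Suc K)) + gauss N K"
              unfolding sm unfolding N by (rule gauss_P2)
            have s1: "sh n (sh (maj ?v') (gauss N (Suc K))) = sh (maj ?v' + length ?v') (sh (Suc K) (gauss N (Suc K)))"
              unfolding sh_sh by (rule arg_cong[of _ _ "\<lambda>c. sh c (gauss N (Suc K))"]) (use K 2 in simp)
            have mj': "maj v = maj ?v' + length ?v'" using mj True False2 by simp
            have c: "(if ?v' \<noteq> [] \<and> ?y < last ?v' then n else 0) = n" using True False2 by simp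
            show ?thesis unfolding r e1 e2 c gn mj' s1 using mle by simp
          next
            case False
            have a: "N - K = length ?v'" using K N 2 by simp
            have gn: "gauss n (Suc n - ?m) = gauss N (Suc K) + sh (length ?v') (gauss N K)"
              unfolding sm unfolding N gauss_Suc_Suc a ..
            have mj': "maj v = maj ?v'" using mj False by simp
            have c: "(if ?v' \<noteq> [] \<and> ?y < last ?v' then n else 0) = 0" using False by simp
            have cm: "length ?v' + maj ?v' = maj ?v' + length ?v'" by simp
            show ?thesis unfolding r e1 e2 c gn mj' using mle by (simp add: add.commute)
          qed
        next
          case 3
          then show ?thesis unfolding r IH' using False2 by simp
        qed
      qed
    qed
    show ?thesis using L Z False by simp
  qed
qed

lemma M_closed: "\<forall>x\<in>set v. 0 < x \<Longrightarrow>
   MS maj (W v n) = (if length v \<le> n then sh (maj v) (gauss n (n - length v)) else {#})"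
proof -
  assume p: "\<forall>x\<in>set v. 0 < x"
  note C = LZ_closed[OF p, of n]
  show ?thesis
  proof (cases "v = []")
    case True
    then show ?thesis unfolding MS_W_split using C by simp
  next
    case False
    consider "length v = n" | "length v < n" | "length v > n" by linarith
    then show ?thesis
    proof cases
      case 1
      then show ?thesis unfolding MS_W_split using C False by simp
    next
      case 2
      then obtain N K where N: "n = Suc N" and K: "n - length v = Suc K" by (metis Suc_diff_Suc less_imp_Suc_add)
      have g: "gauss (Suc N) (Suc K) = gauss N (Suc K) + sh (N - K) (gauss N K)" by (rule gauss_Suc_Suc)
      have a: "N - K = length v" using N K 2 by simp
      have KK: "N - length v = K" using K 2 N by simp
      have e1: "Mlast v n = sh (maj v) (gauss N (Suc K))" using C False 2 N K by simp
      have e2': "Mzero v n = sh (maj v + length v) (gauss N (N - length v))" using C False 2 N by simp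
      have e2: "Mzero v n = sh (length v + maj v) (gauss N K)" unfolding e2' KK by (simp add: add.commute)
      have "MS maj (W v n) = sh (maj v) (gauss N (Suc K)) + sh (length v + maj v) (gauss N K)"
        unfolding MS_W_split e1 e2 ..
      also have "\<dots> = sh (maj v) (gauss (Suc N) (Suc K))" unfolding g a by simp
      finally show ?thesis using N K 2 by simp
    next
      case 3
      then show ?thesis unfolding MS_W_split using C False by simp
    qed
  qed
qed

lemma maj_mafz_fiber: "\<forall>x\<in>set v. 0 < x \<Longrightarrow> MS maj (W v n) = MS mafz (W v n)"
proof -
  assume p: "\<forall>x\<in>set v. 0 < x"
  show ?thesis by (simp only: M_closed[OF p] T_closed[OF p])
qed

definition RA :: "nat set \<Rightarrow> nat \<Rightarrow> nat \<Rightarrow> bool" where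
  "RA A x y = ((x \<noteq> 0 \<and> y \<noteq> 0 \<and> y < x) \<or> (x \<noteq> 0 \<and> y = 0 \<and> x \<in> A) \<or> (x = 0 \<and> y \<noteq> 0 \<and> y \<notin> A))"

lemma DESR_append:
  "DESR R (xs @ ys) = DESR R xs \<union> (\<lambda>i. i + length xs) ` DESR R ys \<union>
     (if xs \<noteq> [] \<and> ys \<noteq> [] \<and> R (last xs) (hd ys) then {length xs} else {})"
proof (rule set_eqI)
  fix i
  let ?L = "length xs"
  show "i \<in> DESR R (xs @ ys) \<longleftrightarrow> i \<in> DESR R xs \<union> (\<lambda>i. i + length xs) ` DESR R ys \<union>
     (if xs \<noteq> [] \<and> ys \<noteq> [] \<and> R (last xs) (hd ys) then {length xs} else {})"
  proof (cases "i < ?L")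
    case True
    then show ?thesis unfolding DESR_def by (auto simp: nth_append)
  next
    case False
    show ?thesis
    proof (cases "i = ?L")
      case True
      show ?thesis
      proof (cases "xs = [] \<or> ys = []")
        case True
        then show ?thesis using \<open>i = ?L\<close> unfolding DESR_def by auto
      next
        case False
        then have "(xs @ ys) ! (i - 1) = last xs" using \<open>i = ?L\<close>
          by (simp add: nth_append last_conv_nth)
        moreover have "(xs @ ys) ! i = hd ys" using \<open>i = ?L\<close> False by (simp add: nth_append hd_conv_nth)
        moreover have "1 \<le> ?L" using False by (cases xs) auto
        moreover have "?L \<le> length (xs @ ys) - 1" using False by (cases ys) auto
        ultimately show ?thesis using \<open>i = ?L\<close> False unfolding DESR_def by auto
      qed
    next
      case False
      then have gt: "?L < i" using \<open>\<not> i < ?L\<close> by simp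
      define j where "j = i - ?L"
      have j: "i = j + ?L" "1 \<le> j" using gt unfolding j_def by auto
      have n1: "(xs @ ys) ! (i - 1) = ys ! (j - 1)"
      proof -
        have "\<not> i - 1 < ?L" "i - 1 - ?L = j - 1" using j by auto
        then show ?thesis by (simp add: nth_append)
      qed
      have n2: "(xs @ ys) ! i = ys ! j" using j by (simp add: nth_append)
      have l: "i \<le> length (xs @ ys) - 1 \<longleftrightarrow> j \<le> length ys - 1" using j by auto
      have a: "i \<in> DESR R (xs @ ys) \<longleftrightarrow> j \<in> DESR R ys"
        unfolding DESR_def using j n1 n2 l by simp
      have b: "i \<in> (\<lambda>i. i + length xs) ` DESR R ys \<longleftrightarrow> j \<in> DESR R ys" using j by auto
      have c: "i \<notin> DESR R xs" using gt DESR_subset[of R xs] by auto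
      show ?thesis using a b c gt by auto
    qed
  qed
qed

lemma DESR_3:
  assumes "M \<noteq> []"
  shows "DESR R (xs @ M @ ys) = DESR R xs \<union> (\<lambda>i. i + length xs) ` DESR R M
     \<union> (\<lambda>i. i + length M + length xs) ` DESR R ys
     \<union> (if xs \<noteq> [] \<and> R (last xs) (hd M) then {length xs} else {})
     \<union> (if ys \<noteq> [] \<and> R (last M) (hd ys) then {length M + length xs} else {})"
proof -
  have "DESR R (xs @ M @ ys) = DESR R xs \<union> (\<lambda>i. i + length xs) ` DESR R (M @ ys) \<union>
     (if xs \<noteq> [] \<and> R (last xs) (hd M) then {length xs} else {})"
    using assms unfolding DESR_append[of R xs "M @ ys"] by simp
  also have "(\<lambda>i. i + length xs) ` DESR R (M @ ys) = (\<lambda>i. i + length xs) ` DESR R M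
     \<union> (\<lambda>i. i + length M + length xs) ` DESR R ys
     \<union> (if ys \<noteq> [] \<and> R (last M) (hd ys) then {length M + length xs} else {})"
    using assms unfolding DESR_append[of R M ys] image_Un image_image by simp
  finally show ?thesis by blast
qed

lemma DESR_cong: "(\<And>x y. x \<in> set w \<Longrightarrow> y \<in> set w \<Longrightarrow> R x y = R' x y) \<Longrightarrow> DESR R w = DESR R' w"
  unfolding DESR_def by auto

lemma DESR_rep: "\<not> R 0 0 \<Longrightarrow> DESR R (replicate a 0) = {}"
  unfolding DESR_def by auto

lemma DESR_single[simp]: "DESR R [x] = {}" unfolding DESR_def by auto

lemma DESR_M: "\<not> R 0 0 \<Longrightarrow> DESR R (replicate a 0 @ [y] @ replicate b 0) =
   (if 0 < a \<and> R 0 y then {a} else {}) \<union> (if 0 < b \<and> R y 0 then {Suc a} else {})"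
proof -
  assume r: "\<not> R 0 0"
  have e: "DESR R (replicate a 0) = {}" "DESR R (replicate b 0) = {}" using r by (simp_all add: DESR_rep)
  have l: "0 < a \<Longrightarrow> last (replicate a (0::nat)) = 0" "0 < b \<Longrightarrow> hd (replicate b (0::nat)) = 0"
    by (simp_all add: last_replicate hd_replicate)
  show ?thesis using DESR_3[of "[y]" R "replicate a 0" "replicate b 0"] e l
    by (cases "a = 0"; cases "b = 0") auto
qed

definition pre :: "nat \<Rightarrow> nat list \<Rightarrow> nat list" where "pre y w = takeWhile (\<lambda>x. x \<noteq> y) w"
definition post :: "nat \<Rightarrow> nat list \<Rightarrow> nat list" where "post y w = tl (dropWhile (\<lambda>x. x \<noteq> y) w)"
definition dxs :: "nat \<Rightarrow> nat list \<Rightarrow> nat list" where "dxs y w = rev (dropWhile (\<lambda>x. x = 0) (rev (pre y w)))"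
definition da :: "nat \<Rightarrow> nat list \<Rightarrow> nat" where "da y w = length (pre y w) - length (dxs y w)"
definition db :: "nat \<Rightarrow> nat list \<Rightarrow> nat" where "db y w = length (takeWhile (\<lambda>x. x = 0) (post y w))"
definition dys :: "nat \<Rightarrow> nat list \<Rightarrow> nat list" where "dys y w = dropWhile (\<lambda>x. x = 0) (post y w)"

definition decomp :: "nat \<Rightarrow> nat list \<Rightarrow> nat list \<Rightarrow> nat \<Rightarrow> nat \<Rightarrow> nat list \<Rightarrow> bool" where
  "decomp y w xs a b ys \<longleftrightarrow> w = xs @ replicate a 0 @ [y] @ replicate b 0 @ ys \<and> y \<notin> set xs
     \<and> (xs \<noteq> [] \<longrightarrow> last xs \<noteq> 0) \<and> (ys \<noteq> [] \<longrightarrow> hd ys \<noteq> 0)"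

definition flip :: "nat \<Rightarrow> nat list \<Rightarrow> nat list" where
  "flip y w = (if 0 < db y w then dxs y w @ replicate (Suc (da y w)) 0 @ [y] @ replicate (db y w - 1) 0 @ dys y w
               else dxs y w @ replicate 0 0 @ [y] @ replicate (da y w) 0 @ dys y w)"

lemma dropWhile_rev_app: "xs \<noteq> [] \<longrightarrow> last xs \<noteq> 0 \<Longrightarrow>
   dropWhile (\<lambda>x. x = 0) (rev (xs @ replicate a (0::nat))) = rev xs"
proof -
  assume h: "xs \<noteq> [] \<longrightarrow> last xs \<noteq> 0"
  have "dropWhile (\<lambda>x. x = 0) (rev xs) = rev xs"
  proof (cases xs rule: rev_cases)
    case Nil then show ?thesis by simp
  next
    case (snoc ys y) then show ?thesis using h by simp
  qed
  then show ?thesis by (simp add: dropWhile_append)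
qed

lemma decomp_parts:
  assumes "decomp y w xs a b ys" "y \<noteq> 0"
  shows "dxs y w = xs \<and> da y w = a \<and> db y w = b \<and> dys y w = ys"
proof -
  have w: "w = xs @ replicate a 0 @ [y] @ replicate b 0 @ ys" and y: "y \<notin> set xs"
    and l: "xs \<noteq> [] \<longrightarrow> last xs \<noteq> 0" and h: "ys \<noteq> [] \<longrightarrow> hd ys \<noteq> 0"
    using assms unfolding decomp_def by auto
  have p: "pre y w = xs @ replicate a 0"
    unfolding pre_def w using y assms(2) by (simp add: takeWhile_append)
  have q: "post y w = replicate b 0 @ ys"
    unfolding post_def w using y assms(2) by (simp add: dropWhile_append)
  have dx: "dxs y w = xs" unfolding dxs_def p using dropWhile_rev_app[OF l] by simp
  have tw: "takeWhile (\<lambda>x. x = 0) ys = []" "dropWhile (\<lambda>x. x = 0) ys = ys"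
    using h by (cases ys; simp)+
  show ?thesis using dx p q tw unfolding da_def db_def dys_def
    by (simp add: takeWhile_append dropWhile_append)
qed

lemma all_zero_rep: "\<forall>x\<in>set zs. x = (0::nat) \<Longrightarrow> zs = replicate (length zs) 0"
  by (simp add: replicate_length_same)

lemma decomp_exists:
  assumes "y \<in> set w" "y \<noteq> 0"
  shows "decomp y w (dxs y w) (da y w) (db y w) (dys y w)"
proof -
  have dw: "dropWhile (\<lambda>x. x \<noteq> y) w \<noteq> []" using assms(1) by (simp add: dropWhile_eq_Nil_conv)
  have hd: "hd (dropWhile (\<lambda>x. x \<noteq> y) w) = y" using hd_dropWhile[OF dw] by simp
  have dd: "dropWhile (\<lambda>x. x \<noteq> y) w = y # post y w"
    unfolding post_def using dw hd by (cases "dropWhile (\<lambda>x. x \<noteq> y) w") auto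
  have w1: "w = pre y w @ y # post y w"
    unfolding pre_def dd[symmetric] by simp
  have ny: "y \<notin> set (pre y w)" unfolding pre_def by (auto dest: set_takeWhileD)
  let ?r = "rev (pre y w)"
  have tz: "takeWhile (\<lambda>x. x = 0) ?r = replicate (da y w) 0"
  proof -
    have "\<forall>x\<in>set (takeWhile (\<lambda>x. x = 0) ?r). x = 0" by (meson set_takeWhileD)
    moreover have ln: "length (takeWhile (\<lambda>x. x = 0) ?r) = da y w"
    proof -
      have "length ?r = length (takeWhile (\<lambda>x. x = 0) ?r) + length (dropWhile (\<lambda>x. x = 0) ?r)"
        by (metis length_append takeWhile_dropWhile_id)
      then show ?thesis unfolding da_def dxs_def by simp
    qed
    ultimately have "takeWhile (\<lambda>x. x = 0) ?r = replicate (length (takeWhile (\<lambda>x. x = 0) ?r)) 0"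
      using all_zero_rep[of "takeWhile (\<lambda>x. x = 0) ?r"] by blast
    then show ?thesis unfolding ln .
  qed
  have pre: "pre y w = dxs y w @ replicate (da y w) 0"
  proof -
    have "pre y w = rev ?r" by simp
    also have "\<dots> = rev (dropWhile (\<lambda>x. x = 0) ?r) @ rev (takeWhile (\<lambda>x. x = 0) ?r)"
      by (metis rev_append takeWhile_dropWhile_id)
    finally show ?thesis unfolding tz dxs_def by simp
  qed
  have post: "post y w = replicate (db y w) 0 @ dys y w"
  proof -
    have "\<forall>x\<in>set (takeWhile (\<lambda>x. x = 0) (post y w)). x = 0" by (meson set_takeWhileD)
    then have t: "takeWhile (\<lambda>x. x = 0) (post y w) = replicate (db y w) 0"
      unfolding db_def using all_zero_rep[of "takeWhile (\<lambda>x. x = 0) (post y w)"] by blast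
    have "post y w = takeWhile (\<lambda>x. x = 0) (post y w) @ dropWhile (\<lambda>x. x = 0) (post y w)" by simp
    then show ?thesis unfolding dys_def t .
  qed
  have lx: "dxs y w \<noteq> [] \<longrightarrow> last (dxs y w) \<noteq> 0"
  proof
    assume ne: "dxs y w \<noteq> []"
    then have "dropWhile (\<lambda>x. x = 0) ?r \<noteq> []" unfolding dxs_def by simp
    then have "hd (dropWhile (\<lambda>x. x = 0) ?r) \<noteq> 0" using hd_dropWhile by blast
    then show "last (dxs y w) \<noteq> 0" unfolding dxs_def using ne
      by (simp add: last_rev)
  qed
  have hy: "dys y w \<noteq> [] \<longrightarrow> hd (dys y w) \<noteq> 0"
    unfolding dys_def using hd_dropWhile by blast
  have nx: "y \<notin> set (dxs y w)" using ny pre by auto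
  have weq: "w = dxs y w @ replicate (da y w) 0 @ [y] @ replicate (db y w) 0 @ dys y w"
    using w1 unfolding pre post by (simp only: append_assoc append.simps)
  show ?thesis unfolding decomp_def using weq lx hy nx by blast
qed

lemma flip_decomp:
  assumes "decomp y w xs a b ys" "y \<noteq> 0"
  shows "flip y w = (if 0 < b then xs @ replicate (Suc a) 0 @ [y] @ replicate (b - 1) 0 @ ys
               else xs @ replicate 0 0 @ [y] @ replicate a 0 @ ys)"
  using decomp_parts[OF assms] unfolding flip_def by simp

lemma decomp_flip:
  assumes "decomp y w xs a b ys" "y \<noteq> 0"
  shows "decomp y (flip y w) xs (if 0 < b then Suc a else 0) (if 0 < b then b - 1 else a) ys"
  using assms flip_decomp[OF assms] unfolding decomp_def by simp

lemma flip_inj: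
  assumes "y \<noteq> 0" "y \<in> set w1" "y \<in> set w2" "flip y w1 = flip y w2"
  shows "w1 = w2"
proof -
  note d1 = decomp_exists[OF assms(2,1)] and d2 = decomp_exists[OF assms(3,1)]
  let ?x1 = "dxs y w1" and ?a1 = "da y w1" and ?b1 = "db y w1" and ?y1 = "dys y w1"
  let ?x2 = "dxs y w2" and ?a2 = "da y w2" and ?b2 = "db y w2" and ?y2 = "dys y w2"
  note f1 = decomp_parts[OF decomp_flip[OF d1 assms(1)] assms(1)]
  note f2 = decomp_parts[OF decomp_flip[OF d2 assms(1)] assms(1)]
  have e: "?x1 = ?x2" "?y1 = ?y2"
    "(if 0 < ?b1 then Suc ?a1 else 0) = (if 0 < ?b2 then Suc ?a2 else 0)"
    "(if 0 < ?b1 then ?b1 - 1 else ?a1) = (if 0 < ?b2 then ?b2 - 1 else ?a2)"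
    using f1 f2 assms(4) by simp_all
  then have "?a1 = ?a2 \<and> ?b1 = ?b2" by (auto split: if_splits)
  then show ?thesis using d1 d2 e unfolding decomp_def by simp
qed

lemma Pos_rep0[simp]: "Pos (replicate a 0) = []" unfolding Pos_def by (induction a) auto

lemma flip_props:
  assumes "decomp y w xs a b ys" "y \<noteq> 0"
  shows "Pos (flip y w) = Pos w \<and> length (flip y w) = length w"
proof -
  have f: "flip y w = (if 0 < b then xs @ replicate (Suc a) 0 @ [y] @ replicate (b - 1) 0 @ ys
               else xs @ replicate 0 0 @ [y] @ replicate a 0 @ ys)" by (rule flip_decomp[OF assms])
  have w: "w = xs @ replicate a 0 @ [y] @ replicate b 0 @ ys" using assms(1) unfolding decomp_def by simp
  show ?thesis unfolding f using w assms(2) by (cases "0 < b") (simp_all add: Pos_Cons)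
qed

lemma flip_Pos: "y \<noteq> 0 \<Longrightarrow> y \<in> set w \<Longrightarrow> Pos (flip y w) = Pos w"
  using flip_props decomp_exists by blast

lemma flip_length: "y \<noteq> 0 \<Longrightarrow> y \<in> set w \<Longrightarrow> length (flip y w) = length w"
  using flip_props decomp_exists by blast

lemma RA_00[simp]: "\<not> RA A 0 0" unfolding RA_def by simp

lemma hd_M: "hd (replicate a 0 @ [y] @ replicate b (0::nat)) = (if 0 < a then 0 else y)"
  by (cases a) auto

lemma last_M: "last (replicate a 0 @ [y] @ replicate b (0::nat)) = (if 0 < b then 0 else y)"
  by (cases b) (auto simp: last_append)

lemma RA_cong_notin: "x \<noteq> y \<Longrightarrow> z \<noteq> y \<Longrightarrow> RA (A - {y}) x z = RA A x z"
  unfolding RA_def by auto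

lemma flip_DESR:
  assumes d: "decomp y w xs a b ys" and y0: "y \<noteq> 0" and nys: "y \<notin> set ys" and yA: "y \<in> A"
    and cl: "xs \<noteq> [] \<Longrightarrow> (y < last xs \<longleftrightarrow> last xs \<in> A)"
    and cr: "ys \<noteq> [] \<Longrightarrow> (hd ys < y \<longleftrightarrow> hd ys \<notin> A)"
  shows "DESR (RA (A - {y})) (flip y w) = DESR (RA A) w"
proof -
  let ?A' = "A - {y}"
  define M where "M = replicate a 0 @ [y] @ replicate b (0::nat)"
  define a' where "a' = (if 0 < b then Suc a else 0)"
  define b' where "b' = (if 0 < b then b - 1 else a)"
  define M' where "M' = replicate a' 0 @ [y] @ replicate b' (0::nat)"
  have nxs: "y \<notin> set xs" and lx: "xs \<noteq> [] \<Longrightarrow> last xs \<noteq> 0" and hy: "ys \<noteq> [] \<Longrightarrow> hd ys \<noteq> 0"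
    using d unfolding decomp_def by auto
  have w: "w = xs @ M @ ys" using d unfolding decomp_def M_def by simp
  have f: "flip y w = xs @ M' @ ys" using flip_decomp[OF d y0] unfolding M'_def a'_def b'_def
    by (cases "0 < b") auto
  have lM: "length M' = length M" unfolding M_def M'_def a'_def b'_def by auto
  have Mne: "M \<noteq> []" "M' \<noteq> []" unfolding M_def M'_def by auto
  have cx: "DESR (RA ?A') xs = DESR (RA A) xs"
    apply (rule DESR_cong) apply (rule RA_cong_notin) using nxs by blast+
  have cy: "DESR (RA ?A') ys = DESR (RA A) ys"
    apply (rule DESR_cong) apply (rule RA_cong_notin) using nys by blast+
  have i: "DESR (RA ?A') M' = DESR (RA A) M"
    unfolding M_def M'_def DESR_M[of "RA (A - {y})", OF RA_00] DESR_M[of "RA A", OF RA_00] unfolding a'_def b'_def using yA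
    by (cases "0 < b"; cases "b = 1") (auto simp: RA_def)
  have ii: "xs \<noteq> [] \<Longrightarrow> RA ?A' (last xs) (hd M') = RA A (last xs) (hd M)"
  proof -
    assume ne: "xs \<noteq> []"
    have u: "last xs \<noteq> 0" "last xs \<noteq> y" using lx[OF ne] nxs ne last_in_set by auto
    have c: "y < last xs \<longleftrightarrow> last xs \<in> A" using cl[OF ne] .
    show ?thesis unfolding M_def M'_def hd_M a'_def b'_def using u c y0
      by (cases "0 < b"; cases "0 < a") (auto simp: RA_def)
  qed
  have iii: "ys \<noteq> [] \<Longrightarrow> RA ?A' (last M') (hd ys) = RA A (last M) (hd ys)"
  proof -
    assume ne: "ys \<noteq> []"
    have u: "hd ys \<noteq> 0" "hd ys \<noteq> y" using hy[OF ne] nys ne hd_in_set by auto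
    have c: "hd ys < y \<longleftrightarrow> hd ys \<notin> A" using cr[OF ne] .
    show ?thesis unfolding M_def M'_def last_M a'_def b'_def using u c y0
      by (cases "0 < b"; cases "0 < a"; cases "b = 1") (auto simp: RA_def)
  qed
  have "DESR (RA ?A') (flip y w) = DESR (RA ?A') xs \<union> (\<lambda>i. i + length xs) ` DESR (RA ?A') M'
     \<union> (\<lambda>i. i + length M' + length xs) ` DESR (RA ?A') ys
     \<union> (if xs \<noteq> [] \<and> RA ?A' (last xs) (hd M') then {length xs} else {})
     \<union> (if ys \<noteq> [] \<and> RA ?A' (last M') (hd ys) then {length M' + length xs} else {})"
    unfolding f by (rule DESR_3[OF Mne(2)])
  also have "\<dots> = DESR (RA A) xs \<union> (\<lambda>i. i + length xs) ` DESR (RA A) M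
     \<union> (\<lambda>i. i + length M + length xs) ` DESR (RA A) ys
     \<union> (if xs \<noteq> [] \<and> RA A (last xs) (hd M) then {length xs} else {})
     \<union> (if ys \<noteq> [] \<and> RA A (last M) (hd ys) then {length M + length xs} else {})"
    unfolding cx cy i lM using ii iii by (cases "xs = []"; cases "ys = []") auto
  also have "\<dots> = DESR (RA A) w"
    unfolding w by (rule DESR_3[OF Mne(1), symmetric])
  finally show ?thesis .
qed

definition is_der :: "nat list \<Rightarrow> bool" where
  "is_der v \<longleftrightarrow> distinct v \<and> set v = {1..length v} \<and> (\<forall>j<length v. v ! j \<noteq> Suc j)"

definition ZW :: "nat \<Rightarrow> nat list set" where
  "ZW n = {w. length w = n \<and> is_der (Pos w)}"

definition Ath :: "nat list \<Rightarrow> nat \<Rightarrow> nat set" where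
  "Ath v t = {v ! j | j. j < length v \<and> (Suc j < v ! j \<or> t \<le> v ! j)}"

definition Nset :: "nat list \<Rightarrow> nat set" where
  "Nset v = {v ! j | j. j < length v \<and> v ! j < Suc j}"

definition Fl :: "nat \<Rightarrow> nat list \<Rightarrow> nat list" where
  "Fl t w = (if t \<in> Nset (Pos w) then flip t w else w)"

lemma length_Pos_le: "length (Pos w) \<le> length w" unfolding Pos_def by simp

lemma finite_ZW: "finite (ZW n)"
proof -
  have "ZW n \<subseteq> {w. set w \<subseteq> {0..n} \<and> length w = n}"
  proof
    fix w assume w: "w \<in> ZW n"
    then have d: "set (Pos w) = {1..length (Pos w)}" "length w = n" unfolding ZW_def is_der_def by auto
    have "set w \<subseteq> {0..n}"
    proof
      fix x assume x: "x \<in> set w"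
      show "x \<in> {0..n}"
      proof (cases "x = 0")
        case False
        then have "x \<in> set (Pos w)" using x unfolding Pos_def by auto
        then show ?thesis using d length_Pos_le[of w] by auto
      qed simp
    qed
    then show "w \<in> {w. set w \<subseteq> {0..n} \<and> length w = n}" using d by auto
  qed
  moreover have "finite {w. set w \<subseteq> {0..n} \<and> length w = n}" by (rule finite_lists_length_eq) simp
  ultimately show ?thesis using finite_subset by blast
qed

lemma mem_idx: "distinct v \<Longrightarrow> i < length v \<Longrightarrow>
   v ! i \<in> {v ! j | j. j < length v \<and> P j (v ! j)} \<longleftrightarrow> P i (v ! i)"
  by (auto simp: nth_eq_iff_index_eq)

lemma Ath_Suc_notN:
  assumes "is_der v" "t \<notin> Nset v"
  shows "Ath v (Suc t) = Ath v t"
proof -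
  have "\<And>j. j < length v \<Longrightarrow> (Suc j < v ! j \<or> Suc t \<le> v ! j) \<longleftrightarrow> (Suc j < v ! j \<or> t \<le> v ! j)"
  proof -
    fix j assume j: "j < length v"
    have "v ! j \<noteq> Suc j" using assms(1) j unfolding is_der_def by auto
    moreover have "\<not> (v ! j = t \<and> v ! j < Suc j)" using assms(2) j unfolding Nset_def by auto
    ultimately show "(Suc j < v ! j \<or> Suc t \<le> v ! j) \<longleftrightarrow> (Suc j < v ! j \<or> t \<le> v ! j)" by auto
  qed
  then show ?thesis unfolding Ath_def by blast
qed

lemma Ath_Suc_N:
  assumes "is_der v" "t \<in> Nset v"
  shows "Ath v (Suc t) = Ath v t - {t}"
proof -
  have dv: "distinct v" using assms(1) unfolding is_der_def by auto
  obtain j0 where j0: "j0 < length v" "v ! j0 = t" "t < Suc j0" using assms(2) unfolding Nset_def by auto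
  show ?thesis
  proof (rule set_eqI)
    fix x
    show "x \<in> Ath v (Suc t) \<longleftrightarrow> x \<in> Ath v t - {t}"
    proof
      assume "x \<in> Ath v (Suc t)"
      then obtain j where j: "j < length v" "x = v ! j" "Suc j < v ! j \<or> Suc t \<le> v ! j" unfolding Ath_def by auto
      have "x \<noteq> t"
      proof
        assume xt: "x = t"
        then have "v ! j = v ! j0" using j j0 by simp
        then have "j = j0" using dv j(1) j0(1) by (simp add: nth_eq_iff_index_eq)
        then show False using j j0 xt by simp
      qed
      then show "x \<in> Ath v t - {t}" using j unfolding Ath_def by auto
    next
      assume "x \<in> Ath v t - {t}"
      then obtain j where j: "j < length v" "x = v ! j" "Suc j < v ! j \<or> t \<le> v ! j" "x \<noteq> t" unfolding Ath_def by auto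
      then show "x \<in> Ath v (Suc t)" unfolding Ath_def by auto
    qed
  qed
qed

lemma hd_Pos: "ys \<noteq> [] \<Longrightarrow> hd ys \<noteq> 0 \<Longrightarrow> Pos ys \<noteq> [] \<and> hd (Pos ys) = hd ys"
  by (cases ys) (auto simp: Pos_Cons)

lemma decomp_Pos: "decomp t w xs a b ys \<Longrightarrow> t \<noteq> 0 \<Longrightarrow> Pos w = Pos xs @ t # Pos ys"
  unfolding decomp_def by (auto simp: Pos_Cons)

lemma Nset_set: "t \<in> Nset v \<Longrightarrow> t \<in> set v" unfolding Nset_def by auto

lemma Pos_set: "x \<in> set (Pos w) \<Longrightarrow> x \<in> set w" unfolding Pos_def by auto

lemma der_pos: "is_der v \<Longrightarrow> x \<in> set v \<Longrightarrow> 0 < x" unfolding is_der_def by auto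

lemma Fl_props:
  assumes w: "w \<in> ZW n"
  shows "Fl t w \<in> ZW n \<and> Pos (Fl t w) = Pos w \<and>
         DESR (RA (Ath (Pos w) (Suc t))) (Fl t w) = DESR (RA (Ath (Pos w) t)) w"
proof (cases "t \<in> Nset (Pos w)")
  case False
  then show ?thesis using w Ath_Suc_notN[of "Pos w" t] unfolding Fl_def ZW_def by simp
next
  case True
  let ?v = "Pos w"
  have der: "is_der ?v" using w unfolding ZW_def by simp
  have dv: "distinct ?v" using der unfolding is_der_def by simp
  have tv: "t \<in> set ?v" using Nset_set[OF True] .
  have t0: "t \<noteq> 0" using der_pos[OF der tv] by simp
  have tw: "t \<in> set w" using Pos_set[OF tv] .
  note d = decomp_exists[OF tw t0]
  obtain xs a b ys where dd: "decomp t w xs a b ys" using d by blast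
  have pw: "?v = Pos xs @ t # Pos ys" using decomp_Pos[OF dd t0] .
  let ?j0 = "length (Pos xs)"
  have vj0: "?v ! ?j0 = t" "?j0 < length ?v" using pw by auto
  have nys: "t \<notin> set ys"
  proof
    assume "t \<in> set ys"
    then have "t \<in> set (Pos ys)" using t0 unfolding Pos_def by auto
    then show False using dv pw by auto
  qed
  have tlt: "t < Suc ?j0"
  proof -
    obtain j where j: "j < length ?v" "?v ! j = t" "t < Suc j" using True unfolding Nset_def by auto
    have "j = ?j0" using j vj0 dv by (metis nth_eq_iff_index_eq)
    then show ?thesis using j by simp
  qed
  have yA: "t \<in> Ath ?v t" using vj0 unfolding Ath_def by auto
  have cl: "xs \<noteq> [] \<Longrightarrow> (t < last xs \<longleftrightarrow> last xs \<in> Ath ?v t)"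
  proof -
    assume ne: "xs \<noteq> []"
    have lx: "last xs \<noteq> 0" using dd ne unfolding decomp_def by auto
    have lp: "Pos xs \<noteq> []" "last (Pos xs) = last xs" using last_Pos[OF ne lx] by auto
    define i where "i = ?j0 - 1"
    have i: "i < length ?v" "?v ! i = last xs" "Suc i = ?j0"
      using lp pw unfolding i_def by (auto simp: nth_append last_conv_nth)
    have ut: "last xs \<noteq> t" using i vj0 dv by (metis nth_eq_iff_index_eq n_not_Suc_n)
    have "last xs \<in> Ath ?v t \<longleftrightarrow> (Suc i < last xs \<or> t \<le> last xs)"
      using mem_idx[OF dv i(1), of "\<lambda>j x. Suc j < x \<or> t \<le> x"] i unfolding Ath_def by simp
    then show ?thesis using i tlt ut by auto
  qed
  have cr: "ys \<noteq> [] \<Longrightarrow> (hd ys < t \<longleftrightarrow> hd ys \<notin> Ath ?v t)"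
  proof -
    assume ne: "ys \<noteq> []"
    have hy: "hd ys \<noteq> 0" using dd ne unfolding decomp_def by auto
    have hp: "Pos ys \<noteq> []" "hd (Pos ys) = hd ys" using hd_Pos[OF ne hy] by auto
    define i where "i = Suc ?j0"
    have i: "i < length ?v" "?v ! i = hd ys"
      using hp pw unfolding i_def by (auto simp: nth_append hd_conv_nth)
    have "hd ys \<in> Ath ?v t \<longleftrightarrow> (Suc i < hd ys \<or> t \<le> hd ys)"
      using mem_idx[OF dv i(1), of "\<lambda>j x. Suc j < x \<or> t \<le> x"] i unfolding Ath_def by simp
    then show ?thesis using i tlt unfolding i_def by auto
  qed
  have fl: "Fl t w = flip t w" using True unfolding Fl_def by simp
  have main: "DESR (RA (Ath ?v t - {t})) (flip t w) = DESR (RA (Ath ?v t)) w"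
    by (rule flip_DESR[OF dd t0 nys yA cl cr])
  have pp: "Pos (flip t w) = Pos w" "length (flip t w) = length w" using flip_props[OF dd t0] by auto
  show ?thesis unfolding fl Ath_Suc_N[OF der True] main using pp w unfolding ZW_def by simp
qed

definition Eset :: "nat list \<Rightarrow> nat set" where
  "Eset v = {v ! j | j. j < length v \<and> Suc j < v ! j}"

lemma Fl_inj: "inj_on (Fl t) (ZW n)"
proof (rule inj_onI)
  fix w1 w2 assume w: "w1 \<in> ZW n" "w2 \<in> ZW n" and e: "Fl t w1 = Fl t w2"
  have p: "Pos w1 = Pos w2" using Fl_props[OF w(1), of t] Fl_props[OF w(2), of t] e by simp
  show "w1 = w2"
  proof (cases "t \<in> Nset (Pos w1)")
    case True
    then have t2: "t \<in> Nset (Pos w2)" using p by simp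
    have d: "is_der (Pos w1)" using w unfolding ZW_def by simp
    have tv: "t \<in> set (Pos w1)" "t \<in> set (Pos w2)" using Nset_set True t2 by auto
    have t0: "t \<noteq> 0" using der_pos[OF d tv(1)] by simp
    have "flip t w1 = flip t w2" using e True t2 unfolding Fl_def by simp
    then show ?thesis using flip_inj[OF t0 Pos_set[OF tv(1)] Pos_set[OF tv(2)]] by simp
  next
    case False
    then have "t \<notin> Nset (Pos w2)" using p by simp
    then show ?thesis using e False unfolding Fl_def by simp
  qed
qed

lemma Fl_surj: "Fl t ` ZW n = ZW n"
  by (rule endo_inj_surj[OF finite_ZW]) (use Fl_props Fl_inj in auto)

lemma chain_step:
  "card {w\<in>ZW n. Q (Pos w) (DESR (RA (Ath (Pos w) (Suc t))) w)} =
   card {w\<in>ZW n. Q (Pos w) (DESR (RA (Ath (Pos w) t)) w)}"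
proof -
  let ?S = "{w\<in>ZW n. Q (Pos w) (DESR (RA (Ath (Pos w) t)) w)}"
  let ?T = "{w\<in>ZW n. Q (Pos w) (DESR (RA (Ath (Pos w) (Suc t))) w)}"
  have im: "Fl t ` ?S = ?T"
  proof
    show "Fl t ` ?S \<subseteq> ?T"
    proof
      fix x assume "x \<in> Fl t ` ?S"
      then obtain w where w: "w \<in> ?S" "x = Fl t w" by blast
      then have wz: "w \<in> ZW n" by simp
      show "x \<in> ?T" using Fl_props[OF wz, of t] w by simp
    qed
  next
    show "?T \<subseteq> Fl t ` ?S"
    proof
      fix x assume x: "x \<in> ?T"
      then have "x \<in> Fl t ` ZW n" using Fl_surj by simp
      then obtain w where w: "w \<in> ZW n" "x = Fl t w" by blast
      have "w \<in> ?S" using Fl_props[OF w(1), of t] w x by simp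
      then show "x \<in> Fl t ` ?S" using w by blast
    qed
  qed
  have inj: "inj_on (Fl t) ?S" using Fl_inj by (rule inj_on_subset) auto
  show ?thesis using card_image[OF inj] unfolding im by simp
qed

lemma chain:
  "card {w\<in>ZW n. Q (Pos w) (DESR (RA (Ath (Pos w) t)) w)} =
   card {w\<in>ZW n. Q (Pos w) (DESR (RA (Ath (Pos w) 0)) w)}"
proof (induction t)
  case (Suc t)
  then show ?case using chain_step[of n Q t] by simp
qed simp

lemma Ath_0: "Ath v 0 = set v"
  unfolding Ath_def by (auto simp: set_conv_nth)

lemma Ath_big: "is_der v \<Longrightarrow> length v \<le> n \<Longrightarrow> Ath v (Suc n) = Eset v"
proof -
  assume d: "is_der v" "length v \<le> n"
  have "\<And>j. j < length v \<Longrightarrow> v ! j \<le> n"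
  proof -
    fix j assume "j < length v"
    then have "v ! j \<in> set v" by simp
    then show "v ! j \<le> n" using d unfolding is_der_def by auto
  qed
  then have "\<And>j. j < length v \<Longrightarrow> \<not> Suc n \<le> v ! j" by (simp add: not_less_eq_eq)
  then show ?thesis unfolding Ath_def Eset_def by blast
qed

lemma DES_RA: "DES w = DESR (RA (set (Pos w))) w"
  unfolding DES_DESR
proof (rule DESR_cong)
  fix x y assume "x \<in> set w" "y \<in> set w"
  then show "(y < x) = RA (set (Pos w)) x y" unfolding RA_def Pos_def by auto
qed

lemma chain_full:
  "card {w\<in>ZW n. Q (Pos w) (DES w)} = card {w\<in>ZW n. Q (Pos w) (DESR (RA (Eset (Pos w))) w)}"
proof -
  have a: "{w\<in>ZW n. Q (Pos w) (DES w)} = {w\<in>ZW n. Q (Pos w) (DESR (RA (Ath (Pos w) 0)) w)}"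
    unfolding Ath_0 DES_RA ..
  have b: "{w\<in>ZW n. Q (Pos w) (DESR (RA (Eset (Pos w))) w)} = {w\<in>ZW n. Q (Pos w) (DESR (RA (Ath (Pos w) (Suc n))) w)}"
  proof -
    have "\<And>w. w \<in> ZW n \<Longrightarrow> Ath (Pos w) (Suc n) = Eset (Pos w)"
    proof -
      fix w assume "w \<in> ZW n"
      then have "is_der (Pos w)" "length (Pos w) \<le> n" using length_Pos_le[of w] unfolding ZW_def by auto
      then show "Ath (Pos w) (Suc n) = Eset (Pos w)" by (rule Ath_big)
    qed
    then show ?thesis by auto
  qed
  show ?thesis unfolding a b chain[of n Q "Suc n"] ..
qed

lemma fiber_card: "\<forall>x\<in>set v. 0 < x \<Longrightarrow> card {w\<in>W v n. maj w = c} = card {w\<in>W v n. mafz w = c}"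
proof -
  assume p: "\<forall>x\<in>set v. 0 < x"
  have "count (MS maj (W v n)) c = count (MS mafz (W v n)) c" using maj_mafz_fiber[OF p] by simp
  then show ?thesis unfolding MS_def by (simp add: count_image_mset_eq_card_vimage)
qed

lemma ZW_fibers:
  "{w\<in>ZW n. P (Pos w) \<and> f w = c} = (\<Union>v\<in>{v\<in>Pos ` ZW n. P v}. {w\<in>W v n. f w = c})"
  unfolding ZW_def W_def by auto

lemma maj_mafz_ZW: "card {w\<in>ZW n. P (Pos w) \<and> maj w = c} = card {w\<in>ZW n. P (Pos w) \<and> mafz w = c}"
proof -
  let ?V = "{v\<in>Pos ` ZW n. P v}"
  have fV: "finite ?V" using finite_ZW by simp
  have card_f: "card {w\<in>ZW n. P (Pos w) \<and> f w = c} = (\<Sum>v\<in>?V. card {w\<in>W v n. f w = c})" for f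
    unfolding ZW_fibers
  proof (rule card_UN_disjoint[OF fV])
    show "\<forall>i\<in>?V. finite {w \<in> W i n. f w = c}" by simp
    show "\<forall>i\<in>?V. \<forall>j\<in>?V. i \<noteq> j \<longrightarrow> {w \<in> W i n. f w = c} \<inter> {w \<in> W j n. f w = c} = {}"
      unfolding W_def by auto
  qed
  have eq: "card {w\<in>W v n. maj w = c} = card {w\<in>W v n. mafz w = c}" if v: "v \<in> ?V" for v
  proof -
    obtain w where "w \<in> ZW n" "v = Pos w" using v by auto
    then have "is_der v" unfolding ZW_def by simp
    then have "\<forall>x\<in>set v. 0 < x" using der_pos by blast
    then show ?thesis by (rule fiber_card)
  qed
  show ?thesis unfolding card_f using eq by (rule sum.cong[OF refl])
qed

definition rk :: "nat list \<Rightarrow> nat \<Rightarrow> nat" where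
  "rk L k = card {x \<in> set L. x \<le> k}"

lemma sw_filter: "sorted_wrt (<) (filter P [1..<n+1])"
  using sorted_wrt_filter sorted_wrt_upt by blast

lemma rk_nth:
  assumes s: "sorted_wrt (<) L" and j: "j < length L"
  shows "rk L (L ! j) = Suc j"
proof -
  have d: "distinct L" using s by (simp add: strict_sorted_iff)
  have "{x \<in> set L. x \<le> L ! j} = (\<lambda>i. L ! i) ` {..j}"
  proof (rule set_eqI)
    fix x
    show "x \<in> {x \<in> set L. x \<le> L ! j} \<longleftrightarrow> x \<in> (\<lambda>i. L ! i) ` {..j}"
    proof
      assume "x \<in> {x \<in> set L. x \<le> L ! j}"
      then obtain i where i: "i < length L" "x = L ! i" "L ! i \<le> L ! j" by (auto simp: in_set_conv_nth)
      have "i \<le> j"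
      proof (rule ccontr)
        assume "\<not> i \<le> j"
        then have "L ! j < L ! i" using sorted_wrt_nth_less[OF s, of j i] i by simp
        then show False using i by simp
      qed
      then show "x \<in> (\<lambda>i. L ! i) ` {..j}" using i by auto
    next
      assume "x \<in> (\<lambda>i. L ! i) ` {..j}"
      then obtain i where i: "i \<le> j" "x = L ! i" by auto
      have "L ! i \<le> L ! j"
      proof (cases "i = j")
        case False
        then show ?thesis using sorted_wrt_nth_less[OF s, of i j] i j by simp
      qed simp
      then show "x \<in> {x \<in> set L. x \<le> L ! j}" using i j by auto
    qed
  qed
  moreover have "inj_on (\<lambda>i. L ! i) {..j}"
    using d j by (auto intro!: inj_onI simp: nth_eq_iff_index_eq)
  ultimately show ?thesis unfolding rk_def by (simp add: card_image)
qed

lemma rk_pos: "sorted_wrt (<) L \<Longrightarrow> c \<in> set L \<Longrightarrow> 1 \<le> rk L c \<and> rk L c \<le> length L \<and> L ! (rk L c - 1) = c"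
proof -
  assume s: "sorted_wrt (<) L" and c: "c \<in> set L"
  then obtain j where j: "j < length L" "c = L ! j" by (auto simp: in_set_conv_nth)
  then show ?thesis using rk_nth[OF s j(1)] by simp
qed

lemma rk_less:
  assumes s: "sorted_wrt (<) L" and a: "a \<in> set L" and b: "b \<in> set L"
  shows "rk L a < rk L b \<longleftrightarrow> a < b"
proof -
  obtain i where i: "i < length L" "a = L ! i" using a by (auto simp: in_set_conv_nth)
  obtain j where j: "j < length L" "b = L ! j" using b by (auto simp: in_set_conv_nth)
  have "i < j \<longleftrightarrow> L ! i < L ! j"
  proof
    assume "i < j" then show "L ! i < L ! j" using sorted_wrt_nth_less[OF s _ j(1)] by simp
  next
    assume lt: "L ! i < L ! j"
    show "i < j"
    proof (rule ccontr)
      assume "\<not> i < j"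
      then have "j < i \<or> i = j" by auto
      then show False using sorted_wrt_nth_less[OF s, of j i] i lt by auto
    qed
  qed
  then show ?thesis using rk_nth[OF s i(1)] rk_nth[OF s j(1)] i j by simp
qed

lemma rk_inj:
  assumes s: "sorted_wrt (<) L" and a: "a \<in> set L" and b: "b \<in> set L"
  shows "rk L a = rk L b \<longleftrightarrow> a = b"
  using rk_less[OF s a b] rk_less[OF s b a] by (metis nat_neq_iff)

definition cs :: "nat \<Rightarrow> (nat \<Rightarrow> nat) \<Rightarrow> nat list" where
  "cs n \<sigma> = filter (\<lambda>i. \<sigma> i \<noteq> i) [1..<n+1]"

lemma set_cs: "set (cs n \<sigma>) = {i \<in> {1..n}. \<sigma> i \<noteq> i}"
  unfolding cs_def by auto

lemma cs_sorted: "sorted_wrt (<) (cs n \<sigma>)"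
  unfolding cs_def by (rule sw_filter)

lemma red_rk: "red n \<sigma> k = rk (cs n \<sigma>) k"
  unfolding red_def rk_def set_cs by (rule arg_cong[where f=card]) auto

lemma perm_NF: "\<sigma> permutes {1..n} \<Longrightarrow> i \<in> set (cs n \<sigma>) \<Longrightarrow> \<sigma> i \<in> set (cs n \<sigma>)"
proof -
  assume p: "\<sigma> permutes {1..n}" and i: "i \<in> set (cs n \<sigma>)"
  then have i1: "i \<in> {1..n}" "\<sigma> i \<noteq> i" unfolding set_cs by auto
  have "\<sigma> i \<in> {1..n}" using permutes_in_image[OF p] i1 by simp
  moreover have "\<sigma> (\<sigma> i) \<noteq> \<sigma> i"
  proof
    assume "\<sigma> (\<sigma> i) = \<sigma> i"
    then have "\<sigma> i = i" using permutes_inj[OF p] by (simp add: inj_eq)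
    then show False using i1 by simp
  qed
  ultimately show ?thesis unfolding set_cs by simp
qed

lemma ZDer_nth: "k < n \<Longrightarrow> ZDer n \<sigma> ! k = (if \<sigma> (Suc k) = Suc k then 0 else red n \<sigma> (\<sigma> (Suc k)))"
  unfolding ZDer_def by (simp del: upt_Suc)

lemma length_ZDer[simp]: "length (ZDer n \<sigma>) = n" unfolding ZDer_def by simp

lemma red_pos: "\<sigma> permutes {1..n} \<Longrightarrow> i \<in> set (cs n \<sigma>) \<Longrightarrow> 1 \<le> red n \<sigma> (\<sigma> i)"
  using rk_pos[OF cs_sorted perm_NF] unfolding red_rk by blast

lemma Pos_ZDer: "\<sigma> permutes {1..n} \<Longrightarrow> Pos (ZDer n \<sigma>) = map (\<lambda>i. red n \<sigma> (\<sigma> i)) (cs n \<sigma>)"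
proof -
  assume p: "\<sigma> permutes {1..n}"
  let ?f = "\<lambda>i. if \<sigma> i = i then 0 else red n \<sigma> (\<sigma> i)"
  have "Pos (ZDer n \<sigma>) = map ?f (filter (\<lambda>i. 0 < ?f i) [1..<n+1])"
    unfolding ZDer_def Pos_def by (simp add: filter_map comp_def)
  also have "filter (\<lambda>i. 0 < ?f i) [1..<n+1] = cs n \<sigma>"
    unfolding cs_def
  proof (rule filter_cong[OF refl])
    fix i assume "i \<in> set [1..<n+1]"
    then have "\<sigma> i \<noteq> i \<Longrightarrow> i \<in> set (cs n \<sigma>)" unfolding set_cs by auto
    then show "(0 < ?f i) = (\<sigma> i \<noteq> i)" using red_pos[OF p] by fastforce
  qed
  also have "map ?f (cs n \<sigma>) = map (\<lambda>i. red n \<sigma> (\<sigma> i)) (cs n \<sigma>)"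
    by (rule map_cong[OF refl]) (auto simp: set_cs)
  finally show ?thesis .
qed

lemma ZDer_ZW: "\<sigma> permutes {1..n} \<Longrightarrow> ZDer n \<sigma> \<in> ZW n"
proof -
  assume p: "\<sigma> permutes {1..n}"
  let ?L = "cs n \<sigma>" let ?m = "length ?L"
  let ?v = "map (\<lambda>i. red n \<sigma> (\<sigma> i)) ?L"
  have s: "sorted_wrt (<) ?L" by (rule cs_sorted)
  have dL: "distinct ?L" using s by (simp add: strict_sorted_iff)
  have inj: "inj_on (\<lambda>i. red n \<sigma> (\<sigma> i)) (set ?L)"
  proof (rule inj_onI)
    fix a b assume a: "a \<in> set ?L" and b: "b \<in> set ?L" and e: "red n \<sigma> (\<sigma> a) = red n \<sigma> (\<sigma> b)"
    then have "\<sigma> a = \<sigma> b" using rk_inj[OF s perm_NF[OF p a] perm_NF[OF p b]] unfolding red_rk by simp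
    then show "a = b" using permutes_inj[OF p] by (simp add: inj_eq)
  qed
  have dv: "distinct ?v" using dL inj by (simp add: distinct_map)
  have sub: "set ?v \<subseteq> {1..?m}"
  proof
    fix x assume "x \<in> set ?v"
    then obtain i where i: "i \<in> set ?L" "x = red n \<sigma> (\<sigma> i)" by auto
    then show "x \<in> {1..?m}" using rk_pos[OF s perm_NF[OF p i(1)]] unfolding red_rk by auto
  qed
  have sv: "set ?v = {1..?m}"
  proof (rule card_subset_eq[OF _ sub])
    show "card (set ?v) = card {1..?m}" using distinct_card[OF dv] by simp
  qed simp
  have nf: "\<forall>j<length ?v. ?v ! j \<noteq> Suc j"
  proof (intro allI impI)
    fix j assume j: "j < length ?v"
    then have jL: "j < ?m" by simp
    have c: "?L ! j \<in> set ?L" using jL by simp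
    have r: "red n \<sigma> (?L ! j) = Suc j" using rk_nth[OF s jL] unfolding red_rk .
    have ne: "\<sigma> (?L ! j) \<noteq> ?L ! j" using c unfolding set_cs by simp
    have "red n \<sigma> (\<sigma> (?L ! j)) \<noteq> red n \<sigma> (?L ! j)"
      using rk_inj[OF s perm_NF[OF p c] c] ne unfolding red_rk by simp
    then show "?v ! j \<noteq> Suc j" using r jL by simp
  qed
  have "is_der ?v" unfolding is_der_def using dv sv nf by simp
  then show ?thesis using Pos_ZDer[OF p] unfolding ZW_def by simp
qed

lemma ZDer_fix_iff: "\<sigma> permutes {1..n} \<Longrightarrow> k < n \<Longrightarrow> ZDer n \<sigma> ! k = 0 \<longleftrightarrow> \<sigma> (Suc k) = Suc k"
proof -
  assume p: "\<sigma> permutes {1..n}" and k: "k < n"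
  have "\<sigma> (Suc k) \<noteq> Suc k \<Longrightarrow> 1 \<le> red n \<sigma> (\<sigma> (Suc k))"
    using red_pos[OF p] k unfolding set_cs by auto
  then show ?thesis using ZDer_nth[OF k] by auto
qed

lemma ZDer_inj: "inj_on (ZDer n) {\<sigma>. \<sigma> permutes {1..n}}"
proof (rule inj_onI)
  fix \<sigma>1 \<sigma>2 assume p1: "\<sigma>1 \<in> {\<sigma>. \<sigma> permutes {1..n}}" and p2: "\<sigma>2 \<in> {\<sigma>. \<sigma> permutes {1..n}}"
    and e: "ZDer n \<sigma>1 = ZDer n \<sigma>2"
  from p1 p2 have p1: "\<sigma>1 permutes {1..n}" and p2: "\<sigma>2 permutes {1..n}" by auto
  have fx: "\<sigma>1 i = i \<longleftrightarrow> \<sigma>2 i = i" if i: "i \<in> {1..n}" for i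
  proof -
    obtain k where k: "i = Suc k" "k < n" using i by (cases i) auto
    show ?thesis using ZDer_fix_iff[OF p1 k(2)] ZDer_fix_iff[OF p2 k(2)] e k by simp
  qed
  have ceq: "cs n \<sigma>1 = cs n \<sigma>2" unfolding cs_def by (rule filter_cong[OF refl]) (use fx in auto)
  have req: "red n \<sigma>1 = red n \<sigma>2" unfolding red_rk[abs_def] ceq ..
  show "\<sigma>1 = \<sigma>2"
  proof
    fix i
    show "\<sigma>1 i = \<sigma>2 i"
    proof (cases "i \<in> {1..n}")
      case False
      then show ?thesis using permutes_not_in[OF p1] permutes_not_in[OF p2] by simp
    next
      case True
      then obtain k where k: "i = Suc k" "k < n" by (cases i) auto
      show ?thesis
      proof (cases "\<sigma>1 i = i")
        case True
        then show ?thesis using fx \<open>i \<in> {1..n}\<close> by simp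
      next
        case False
        then have n2: "\<sigma>2 i \<noteq> i" using fx \<open>i \<in> {1..n}\<close> by simp
        have "red n \<sigma>1 (\<sigma>1 i) = red n \<sigma>2 (\<sigma>2 i)"
          using e ZDer_nth[OF k(2), of \<sigma>1] ZDer_nth[OF k(2), of \<sigma>2] False n2 k by simp
        then have r: "rk (cs n \<sigma>1) (\<sigma>1 i) = rk (cs n \<sigma>1) (\<sigma>2 i)" unfolding red_rk ceq .
        have i1: "i \<in> set (cs n \<sigma>1)" "i \<in> set (cs n \<sigma>2)" using False n2 \<open>i \<in> {1..n}\<close> unfolding set_cs by auto
        have s2: "\<sigma>2 i \<in> set (cs n \<sigma>1)" using perm_NF[OF p2 i1(2)] ceq by simp
        show ?thesis using rk_inj[OF cs_sorted perm_NF[OF p1 i1(1)] s2] r by simp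
      qed
    qed
  qed
qed

definition cw :: "nat \<Rightarrow> nat list \<Rightarrow> nat list" where
  "cw n w = filter (\<lambda>i. w ! (i - 1) \<noteq> 0) [1..<n+1]"

definition sig :: "nat \<Rightarrow> nat list \<Rightarrow> nat \<Rightarrow> nat" where
  "sig n w i = (if i \<in> set (cw n w) then cw n w ! (w ! (i - 1) - 1) else i)"

lemma w_map: "length w = n \<Longrightarrow> map (\<lambda>i. w ! (i - 1)) [1..<n+1] = w"
  by (rule nth_equalityI) (auto simp del: upt_Suc)

lemma Pos_cw: "length w = n \<Longrightarrow> Pos w = map (\<lambda>i. w ! (i - 1)) (cw n w)"
proof -
  assume l: "length w = n"
  have "Pos w = filter (\<lambda>x. 0 < x) (map (\<lambda>i. w ! (i - 1)) [1..<n+1])"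
    unfolding Pos_def w_map[OF l] ..
  also have "\<dots> = map (\<lambda>i. w ! (i - 1)) (cw n w)"
    unfolding cw_def by (simp add: filter_map comp_def)
  finally show ?thesis .
qed

lemma set_cw: "set (cw n w) = {i \<in> {1..n}. w ! (i - 1) \<noteq> 0}"
  unfolding cw_def by auto

lemma cw_sorted: "sorted_wrt (<) (cw n w)" unfolding cw_def by (rule sw_filter)

lemma sig_facts:
  assumes w: "w \<in> ZW n"
  shows "sig n w permutes {1..n} \<and> ZDer n (sig n w) = w"
proof -
  let ?L = "cw n w" let ?v = "Pos w" let ?m = "length ?v"
  let ?s = "sig n w"
  have lw: "length w = n" and der: "is_der ?v" using w unfolding ZW_def by auto
  have vL: "?v = map (\<lambda>i. w ! (i - 1)) ?L" using Pos_cw[OF lw] .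
  have lL: "length ?L = ?m" using vL by simp
  have sL: "sorted_wrt (<) ?L" by (rule cw_sorted)
  have dL: "distinct ?L" using sL by (simp add: strict_sorted_iff)
  have dv: "distinct ?v" and sv: "set ?v = {1..?m}" and nf: "\<forall>j<?m. ?v ! j \<noteq> Suc j"
    using der unfolding is_der_def by auto
  have wv: "w ! (?L ! j - 1) = ?v ! j" if "j < ?m" for j
  proof -
    have jL: "j < length ?L" using that lL by simp
    show ?thesis unfolding vL using jL by simp
  qed
  have vr: "1 \<le> ?v ! j \<and> ?v ! j \<le> ?m" if "j < ?m" for j
  proof -
    have "?v ! j \<in> set ?v" using that by simp
    then show ?thesis using sv by auto
  qed
  have sj: "?s (?L ! j) = ?L ! (?v ! j - 1)" if j: "j < ?m" for j
    using j lL wv[OF j] unfolding sig_def by simp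
  have Lsub: "set ?L \<subseteq> {1..n}" unfolding set_cw by auto
  have sin: "?s i \<in> set ?L" if iL: "i \<in> set ?L" for i
  proof -
    obtain j where j: "j < ?m" "i = ?L ! j" using iL lL by (auto simp: in_set_conv_nth)
    then show ?thesis using sj[OF j(1)] vr[OF j(1)] lL by auto
  qed
  have sout: "?s i = i" if "i \<notin> set ?L" for i using that unfolding sig_def by simp
  have inj: "inj_on ?s {1..n}"
  proof (rule inj_onI)
    fix a b assume a: "a \<in> {1..n}" and b: "b \<in> {1..n}" and e: "?s a = ?s b"
    show "a = b"
    proof (cases "a \<in> set ?L")
      case True
      note ta = True
      show ?thesis
      proof (cases "b \<in> set ?L")
        case True
        obtain i where i: "i < ?m" "a = ?L ! i" using ta lL by (auto simp: in_set_conv_nth)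
        obtain j where j: "j < ?m" "b = ?L ! j" using True lL by (auto simp: in_set_conv_nth)
        have "?L ! (?v ! i - 1) = ?L ! (?v ! j - 1)" using e sj[OF i(1)] sj[OF j(1)] i j by simp
        moreover have "?v ! i - 1 < length ?L" "?v ! j - 1 < length ?L" using vr[OF i(1)] vr[OF j(1)] lL by auto
        ultimately have "?v ! i - 1 = ?v ! j - 1" using nth_eq_iff_index_eq[OF dL] by blast
        then have "?v ! i = ?v ! j" using vr[OF i(1)] vr[OF j(1)] by linarith
        then have "i = j" using dv i(1) j(1) by (simp add: nth_eq_iff_index_eq)
        then show ?thesis using i j by simp
      next
        case False
        then show ?thesis using e sin[OF ta] sout[OF False] by simp
      qed
    next
      case False
      show ?thesis
      proof (cases "b \<in> set ?L")
        case True
        have "a = ?s b" using e sout[OF False] by simp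
        then have "a \<in> set ?L" using sin[OF True] by simp
        then show ?thesis using False by simp
      next
        case False2: False
        then show ?thesis using e sout[OF False] sout[OF False2] by simp
      qed
    qed
  qed
  have img: "?s ` {1..n} \<subseteq> {1..n}"
  proof
    fix x assume "x \<in> ?s ` {1..n}"
    then obtain i where i: "i \<in> {1..n}" "x = ?s i" by auto
    show "x \<in> {1..n}"
    proof (cases "i \<in> set ?L")
      case True
      then have "?s i \<in> set ?L" by (rule sin)
      then show ?thesis using Lsub i by blast
    next
      case False
      then show ?thesis using sout i by simp
    qed
  qed
  have bij: "bij_betw ?s {1..n} {1..n}"
    unfolding bij_betw_def using inj endo_inj_surj[OF _ img inj] by simp
  have perm: "?s permutes {1..n}"
  proof (rule bij_imp_permutes[OF bij])
    fix x assume "x \<notin> {1..n}"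
    then have "x \<notin> set ?L" using Lsub by auto
    then show "?s x = x" by (rule sout)
  qed
  have fixiff: "?s i = i \<longleftrightarrow> i \<notin> set ?L" for i
  proof
    assume si: "?s i = i"
    show "i \<notin> set ?L"
    proof
      assume "i \<in> set ?L"
      then obtain j where j: "j < ?m" "i = ?L ! j" using lL by (auto simp: in_set_conv_nth)
      then have "?L ! (?v ! j - 1) = ?L ! j" using si sj[OF j(1)] by simp
      moreover have "?v ! j - 1 < length ?L" "j < length ?L" using vr[OF j(1)] lL j(1) by auto
      ultimately have "?v ! j - 1 = j" using nth_eq_iff_index_eq[OF dL] by blast
      then have "?v ! j = Suc j" using vr[OF j(1)] by linarith
      then show False using nf j(1) by simp
    qed
  qed (rule sout)
  have csL: "cs n ?s = ?L" unfolding cs_def cw_def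
  proof (rule filter_cong[OF refl])
    fix i assume "i \<in> set [1..<n+1]"
    then have "i \<in> {1..n}" by auto
    then show "(?s i \<noteq> i) = (w ! (i - 1) \<noteq> 0)" using fixiff[of i] unfolding set_cw by auto
  qed
  have "ZDer n ?s = w"
  proof (rule nth_equalityI)
    show "length (ZDer n ?s) = length w" using lw by simp
  next
    fix k assume "k < length (ZDer n ?s)"
    then have k: "k < n" by simp
    show "ZDer n ?s ! k = w ! k"
    proof (cases "Suc k \<in> set ?L")
      case False
      then have "w ! k = 0" using k unfolding set_cw by auto
      then show ?thesis using ZDer_nth[OF k] fixiff[of "Suc k"] False by simp
    next
      case True
      then obtain j where j: "j < ?m" "Suc k = ?L ! j" using lL by (auto simp: in_set_conv_nth)
      have ne: "?s (Suc k) \<noteq> Suc k" using fixiff True by simp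
      have "red n ?s (?s (Suc k)) = rk ?L (?L ! (?v ! j - 1))" unfolding red_rk csL using sj[OF j(1)] j by simp
      also have "\<dots> = ?v ! j"
      proof -
        have lt: "?v ! j - 1 < length ?L" using vr[OF j(1)] lL by linarith
        have e1: "rk ?L (?L ! (?v ! j - 1)) = Suc (?v ! j - 1)" by (rule rk_nth[OF sL lt])
        have e2: "Suc (?v ! j - 1) = ?v ! j" using vr[OF j(1)] by linarith
        show ?thesis using e1 e2 by simp
      qed
      also have "\<dots> = w ! k" using wv[OF j(1)] j(2)[symmetric] by simp
      finally show ?thesis using ZDer_nth[OF k] ne by simp
    qed
  qed
  then show ?thesis using perm by simp
qed

lemma ZDer_bij: "bij_betw (ZDer n) {\<sigma>. \<sigma> permutes {1..n}} (ZW n)"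
  unfolding bij_betw_def
proof
  show "inj_on (ZDer n) {\<sigma>. \<sigma> permutes {1..n}}" by (rule ZDer_inj)
  show "ZDer n ` {\<sigma>. \<sigma> permutes {1..n}} = ZW n"
  proof
    show "ZDer n ` {\<sigma>. \<sigma> permutes {1..n}} \<subseteq> ZW n" using ZDer_ZW by auto
    show "ZW n \<subseteq> ZDer n ` {\<sigma>. \<sigma> permutes {1..n}}"
    proof
      fix w assume "w \<in> ZW n"
      then have "sig n w permutes {1..n}" "ZDer n (sig n w) = w" using sig_facts[of w n] by auto
      then show "w \<in> ZDer n ` {\<sigma>. \<sigma> permutes {1..n}}" by (intro image_eqI[of _ _ "sig n w"]) auto
    qed
  qed
qed

lemma card_transfer: "card {\<sigma>. \<sigma> permutes {1..n} \<and> P (ZDer n \<sigma>)} = card {w\<in>ZW n. P w}"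
proof -
  let ?S = "{\<sigma>. \<sigma> permutes {1..n} \<and> P (ZDer n \<sigma>)}"
  have im: "ZDer n ` ?S = {w\<in>ZW n. P w}"
  proof
    show "ZDer n ` ?S \<subseteq> {w\<in>ZW n. P w}" using ZDer_ZW by auto
    show "{w\<in>ZW n. P w} \<subseteq> ZDer n ` ?S"
    proof
      fix w assume w: "w \<in> {w\<in>ZW n. P w}"
      then have "sig n w permutes {1..n}" "ZDer n (sig n w) = w" using sig_facts[of w n] by auto
      then show "w \<in> ZDer n ` ?S" using w by (intro image_eqI[of _ _ "sig n w"]) auto
    qed
  qed
  have inj: "inj_on (ZDer n) ?S" using ZDer_inj by (rule inj_on_subset) auto
  show ?thesis using card_image[OF inj] unfolding im by simp
qed

definition excw :: "nat list \<Rightarrow> nat" where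
  "excw v = card {j. j < length v \<and> Suc j < v ! j}"

lemma fix_eq: "\<sigma> permutes {1..n} \<Longrightarrow> fix_pts n \<sigma> = n - length (Pos (ZDer n \<sigma>))"
proof -
  assume p: "\<sigma> permutes {1..n}"
  have l: "length (Pos (ZDer n \<sigma>)) = length (cs n \<sigma>)" using Pos_ZDer[OF p] by simp
  have d: "distinct (cs n \<sigma>)" using cs_sorted by (simp add: strict_sorted_iff)
  have u: "{1..n} = {i \<in> {1..n}. \<sigma> i = i} \<union> set (cs n \<sigma>)" unfolding set_cs by auto
  have "card {1..n} = card {i \<in> {1..n}. \<sigma> i = i} + card (set (cs n \<sigma>))"
    by (subst u, rule card_Un_disjoint) (auto simp: set_cs)
  then show ?thesis unfolding fix_pts_def l using distinct_card[OF d] by simp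
qed

lemma exc_eq: "\<sigma> permutes {1..n} \<Longrightarrow> exc n \<sigma> = excw (Pos (ZDer n \<sigma>))"
proof -
  assume p: "\<sigma> permutes {1..n}"
  let ?L = "cs n \<sigma>"
  have s: "sorted_wrt (<) ?L" by (rule cs_sorted)
  have d: "distinct ?L" using s by (simp add: strict_sorted_iff)
  have e: "{i \<in> {1..n}. \<sigma> i > i} = (\<lambda>j. ?L ! j) ` {j. j < length ?L \<and> Suc j < red n \<sigma> (\<sigma> (?L ! j))}"
  proof (rule set_eqI)
    fix i
    show "i \<in> {i \<in> {1..n}. \<sigma> i > i} \<longleftrightarrow> i \<in> (\<lambda>j. ?L ! j) ` {j. j < length ?L \<and> Suc j < red n \<sigma> (\<sigma> (?L ! j))}"
    proof
      assume i: "i \<in> {i \<in> {1..n}. \<sigma> i > i}"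
      then have iL: "i \<in> set ?L" unfolding set_cs by auto
      then obtain j where j: "j < length ?L" "i = ?L ! j" by (auto simp: in_set_conv_nth)
      have "Suc j < red n \<sigma> (\<sigma> i)"
        using rk_less[OF s iL perm_NF[OF p iL]] rk_nth[OF s j(1)] i j unfolding red_rk by simp
      then show "i \<in> (\<lambda>j. ?L ! j) ` {j. j < length ?L \<and> Suc j < red n \<sigma> (\<sigma> (?L ! j))}" using j by auto
    next
      assume "i \<in> (\<lambda>j. ?L ! j) ` {j. j < length ?L \<and> Suc j < red n \<sigma> (\<sigma> (?L ! j))}"
      then obtain j where j: "j < length ?L" "i = ?L ! j" "Suc j < red n \<sigma> (\<sigma> i)" by auto
      have iL: "i \<in> set ?L" using j by simp
      have "i < \<sigma> i"
        using rk_less[OF s iL perm_NF[OF p iL]] rk_nth[OF s j(1)] j unfolding red_rk by simp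
      then show "i \<in> {i \<in> {1..n}. \<sigma> i > i}" using iL unfolding set_cs by auto
    qed
  qed
  have inj: "inj_on (\<lambda>j. ?L ! j) {j. j < length ?L \<and> Suc j < red n \<sigma> (\<sigma> (?L ! j))}"
    using d by (auto intro!: inj_onI simp: nth_eq_iff_index_eq)
  have "exc n \<sigma> = card {j. j < length ?L \<and> Suc j < red n \<sigma> (\<sigma> (?L ! j))}"
    unfolding exc_def e using card_image[OF inj] .
  also have "\<dots> = excw (Pos (ZDer n \<sigma>))"
    unfolding excw_def Pos_ZDer[OF p] by (rule arg_cong[where f=card]) auto
  finally show ?thesis .
qed

lemma pword_nth: "k < n \<Longrightarrow> pword n \<sigma> ! k = \<sigma> (Suc k)"
  unfolding pword_def by (simp del: upt_Suc)

lemma length_pword[simp]: "length (pword n \<sigma>) = n" unfolding pword_def by simp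

lemma Eset_iff:
  assumes p: "\<sigma> permutes {1..n}" and c: "c \<in> set (cs n \<sigma>)"
  shows "red n \<sigma> (\<sigma> c) \<in> Eset (Pos (ZDer n \<sigma>)) \<longleftrightarrow> c < \<sigma> c"
proof -
  let ?L = "cs n \<sigma>" let ?v = "Pos (ZDer n \<sigma>)"
  have s: "sorted_wrt (<) ?L" by (rule cs_sorted)
  obtain j where j: "j < length ?L" "c = ?L ! j" using c by (auto simp: in_set_conv_nth)
  have dv: "distinct ?v" using ZDer_ZW[OF p] unfolding ZW_def is_der_def by simp
  have vj: "?v ! j = red n \<sigma> (\<sigma> c)" "j < length ?v" using Pos_ZDer[OF p] j by auto
  have "?v ! j \<in> Eset ?v \<longleftrightarrow> Suc j < ?v ! j"
    using mem_idx[OF dv vj(2), of "\<lambda>j x. Suc j < x"] unfolding Eset_def by simp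
  also have "\<dots> \<longleftrightarrow> red n \<sigma> c < red n \<sigma> (\<sigma> c)" using vj rk_nth[OF s j(1)] j unfolding red_rk by simp
  also have "\<dots> \<longleftrightarrow> c < \<sigma> c" unfolding red_rk by (rule rk_less[OF s c perm_NF[OF p c]])
  finally show ?thesis using vj by simp
qed

lemma DES_pword: "\<sigma> permutes {1..n} \<Longrightarrow> DES (pword n \<sigma>) = DESR (RA (Eset (Pos (ZDer n \<sigma>)))) (ZDer n \<sigma>)"
proof -
  assume p: "\<sigma> permutes {1..n}"
  let ?E = "Eset (Pos (ZDer n \<sigma>))"
  have key: "\<sigma> (Suc i) < \<sigma> i \<longleftrightarrow> RA ?E (ZDer n \<sigma> ! (i - 1)) (ZDer n \<sigma> ! i)" if i: "1 \<le> i" "i \<le> n - 1" for i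
  proof -
    have z1: "ZDer n \<sigma> ! (i - 1) = (if \<sigma> i = i then 0 else red n \<sigma> (\<sigma> i))"
      using ZDer_nth[of "i - 1" n \<sigma>] i by simp
    have z2: "ZDer n \<sigma> ! i = (if \<sigma> (Suc i) = Suc i then 0 else red n \<sigma> (\<sigma> (Suc i)))"
      using ZDer_nth[of i n \<sigma>] i by simp
    have in1: "\<sigma> i \<noteq> i \<Longrightarrow> i \<in> set (cs n \<sigma>)" using i unfolding set_cs by auto
    have in2: "\<sigma> (Suc i) \<noteq> Suc i \<Longrightarrow> Suc i \<in> set (cs n \<sigma>)" using i unfolding set_cs by auto
    have inj: "\<And>a b. \<sigma> a = \<sigma> b \<longleftrightarrow> a = b" using permutes_inj[OF p] by (simp add: inj_eq)
    show ?thesis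
    proof (cases "\<sigma> i = i")
      case True
      note t1 = True
      show ?thesis
      proof (cases "\<sigma> (Suc i) = Suc i")
        case True
        then show ?thesis using t1 z1 z2 unfolding RA_def by simp
      next
        case False
        have pos: "1 \<le> red n \<sigma> (\<sigma> (Suc i))" using red_pos[OF p in2[OF False]] .
        have E: "red n \<sigma> (\<sigma> (Suc i)) \<in> ?E \<longleftrightarrow> Suc i < \<sigma> (Suc i)" using Eset_iff[OF p in2[OF False]] .
        have ne: "\<sigma> (Suc i) \<noteq> i" using t1 inj[of "Suc i" i] by auto
        show ?thesis using t1 False z1 z2 pos E ne unfolding RA_def by auto
      qed
    next
      case False
      note f1 = False
      have pos1: "1 \<le> red n \<sigma> (\<sigma> i)" using red_pos[OF p in1[OF False]] .
      have E1: "red n \<sigma> (\<sigma> i) \<in> ?E \<longleftrightarrow> i < \<sigma> i" using Eset_iff[OF p in1[OF False]] .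
      show ?thesis
      proof (cases "\<sigma> (Suc i) = Suc i")
        case True
        have ne: "\<sigma> i \<noteq> Suc i" using True inj[of i "Suc i"] by auto
        show ?thesis using f1 True z1 z2 pos1 E1 ne unfolding RA_def by auto
      next
        case False
        have pos2: "1 \<le> red n \<sigma> (\<sigma> (Suc i))" using red_pos[OF p in2[OF False]] .
        have lt: "red n \<sigma> (\<sigma> (Suc i)) < red n \<sigma> (\<sigma> i) \<longleftrightarrow> \<sigma> (Suc i) < \<sigma> i"
          unfolding red_rk by (rule rk_less[OF cs_sorted perm_NF[OF p in2[OF False]] perm_NF[OF p in1[OF f1]]])
        show ?thesis using f1 False z1 z2 pos1 pos2 lt unfolding RA_def by auto
      qed
    qed
  qed
  have "DES (pword n \<sigma>) = {i. 1 \<le> i \<and> i \<le> n - 1 \<and> \<sigma> (Suc i) < \<sigma> i}"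
  proof -
    have "pword n \<sigma> ! (i - 1) = \<sigma> i \<and> pword n \<sigma> ! i = \<sigma> (Suc i)" if i: "1 \<le> i" "i \<le> n - 1" for i
    proof -
      have "pword n \<sigma> ! (i - 1) = \<sigma> (Suc (i - 1))" using pword_nth[of "i - 1" n \<sigma>] i by simp
      moreover have "pword n \<sigma> ! i = \<sigma> (Suc i)" using pword_nth[of i n \<sigma>] i by simp
      ultimately show ?thesis using i by simp
    qed
    then show ?thesis unfolding DES_def by auto
  qed
  also have "\<dots> = DESR (RA ?E) (ZDer n \<sigma>)"
    unfolding DESR_def using key by auto
  finally show ?thesis .
qed

lemma transfer_DES:
  "card {\<sigma>. \<sigma> permutes {1..n} \<and> Q (Pos (ZDer n \<sigma>)) (DES (ZDer n \<sigma>))} =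
   card {\<sigma>. \<sigma> permutes {1..n} \<and> Q (Pos (ZDer n \<sigma>)) (DES (pword n \<sigma>))}"
proof -
  have "card {\<sigma>. \<sigma> permutes {1..n} \<and> Q (Pos (ZDer n \<sigma>)) (DES (ZDer n \<sigma>))} = card {w\<in>ZW n. Q (Pos w) (DES w)}"
    by (rule card_transfer)
  also have "\<dots> = card {w\<in>ZW n. Q (Pos w) (DESR (RA (Eset (Pos w))) w)}"
    by (rule chain_full)
  also have "\<dots> = card {\<sigma>. \<sigma> permutes {1..n} \<and> Q (Pos (ZDer n \<sigma>)) (DESR (RA (Eset (Pos (ZDer n \<sigma>)))) (ZDer n \<sigma>))}"
    by (rule card_transfer[symmetric])
  also have "{\<sigma>. \<sigma> permutes {1..n} \<and> Q (Pos (ZDer n \<sigma>)) (DESR (RA (Eset (Pos (ZDer n \<sigma>)))) (ZDer n \<sigma>))} =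
     {\<sigma>. \<sigma> permutes {1..n} \<and> Q (Pos (ZDer n \<sigma>)) (DES (pword n \<sigma>))}"
    using DES_pword by auto
  finally show ?thesis .
qed

lemma part1: "card {\<sigma>. \<sigma> permutes {1..n} \<and> (fix_pts n \<sigma>, dez n \<sigma>, maz n \<sigma>) = (a, b, c)}
          = card {\<sigma>. \<sigma> permutes {1..n} \<and> (fix_pts n \<sigma>, des (pword n \<sigma>), maj (pword n \<sigma>)) = (a, b, c)}"
proof -
  let ?Q = "\<lambda>v S. n - length v = a \<and> card S = b \<and> (\<Sum>i\<in>S. i) = c"
  have "{\<sigma>. \<sigma> permutes {1..n} \<and> (fix_pts n \<sigma>, dez n \<sigma>, maz n \<sigma>) = (a, b, c)} =
        {\<sigma>. \<sigma> permutes {1..n} \<and> ?Q (Pos (ZDer n \<sigma>)) (DES (ZDer n \<sigma>))}"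
    using fix_eq unfolding dez_def maz_def des_def maj_def by auto
  moreover have "{\<sigma>. \<sigma> permutes {1..n} \<and> (fix_pts n \<sigma>, des (pword n \<sigma>), maj (pword n \<sigma>)) = (a, b, c)} =
        {\<sigma>. \<sigma> permutes {1..n} \<and> ?Q (Pos (ZDer n \<sigma>)) (DES (pword n \<sigma>))}"
    using fix_eq unfolding des_def maj_def by auto
  ultimately show ?thesis using transfer_DES[of n ?Q] by simp
qed

lemma part2: "card {\<sigma>. \<sigma> permutes {1..n} \<and> (fix_pts n \<sigma>, exc n \<sigma>, maz n \<sigma>) = (a, b, c)}
          = card {\<sigma>. \<sigma> permutes {1..n} \<and> (fix_pts n \<sigma>, exc n \<sigma>, maj (pword n \<sigma>)) = (a, b, c)}"
proof -
  let ?Q = "\<lambda>v S. n - length v = a \<and> excw v = b \<and> (\<Sum>i\<in>S. i) = c"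
  have "{\<sigma>. \<sigma> permutes {1..n} \<and> (fix_pts n \<sigma>, exc n \<sigma>, maz n \<sigma>) = (a, b, c)} =
        {\<sigma>. \<sigma> permutes {1..n} \<and> ?Q (Pos (ZDer n \<sigma>)) (DES (ZDer n \<sigma>))}"
    using fix_eq exc_eq unfolding maz_def maj_def by auto
  moreover have "{\<sigma>. \<sigma> permutes {1..n} \<and> (fix_pts n \<sigma>, exc n \<sigma>, maj (pword n \<sigma>)) = (a, b, c)} =
        {\<sigma>. \<sigma> permutes {1..n} \<and> ?Q (Pos (ZDer n \<sigma>)) (DES (pword n \<sigma>))}"
    using fix_eq exc_eq unfolding maj_def by auto
  ultimately show ?thesis using transfer_DES[of n ?Q] by simp
qed

lemma part3: "card {\<sigma>. \<sigma> permutes {1..n} \<and> (fix_pts n \<sigma>, exc n \<sigma>, maj (pword n \<sigma>)) = (a, b, c)}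
          = card {\<sigma>. \<sigma> permutes {1..n} \<and> (fix_pts n \<sigma>, exc n \<sigma>, maf n \<sigma>) = (a, b, c)}"
proof -
  let ?P = "\<lambda>v. n - length v = a \<and> excw v = b"
  have e1: "{\<sigma>. \<sigma> permutes {1..n} \<and> (fix_pts n \<sigma>, exc n \<sigma>, maz n \<sigma>) = (a, b, c)} =
        {\<sigma>. \<sigma> permutes {1..n} \<and> (?P (Pos (ZDer n \<sigma>)) \<and> maj (ZDer n \<sigma>) = c)}"
    using fix_eq exc_eq unfolding maz_def by auto
  have e2: "{\<sigma>. \<sigma> permutes {1..n} \<and> (fix_pts n \<sigma>, exc n \<sigma>, maf n \<sigma>) = (a, b, c)} =
        {\<sigma>. \<sigma> permutes {1..n} \<and> (?P (Pos (ZDer n \<sigma>)) \<and> mafz (ZDer n \<sigma>) = c)}"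
    using fix_eq exc_eq unfolding maf_def by auto
  have "card {\<sigma>. \<sigma> permutes {1..n} \<and> (?P (Pos (ZDer n \<sigma>)) \<and> maj (ZDer n \<sigma>) = c)}
      = card {w\<in>ZW n. ?P (Pos w) \<and> maj w = c}"
    by (rule card_transfer)
  also have "\<dots> = card {w\<in>ZW n. ?P (Pos w) \<and> mafz w = c}" by (rule maj_mafz_ZW)
  also have "\<dots> = card {\<sigma>. \<sigma> permutes {1..n} \<and> (?P (Pos (ZDer n \<sigma>)) \<and> mafz (ZDer n \<sigma>) = c)}"
    by (rule card_transfer[symmetric])
  finally have "card {\<sigma>. \<sigma> permutes {1..n} \<and> (fix_pts n \<sigma>, exc n \<sigma>, maz n \<sigma>) = (a, b, c)} =
      card {\<sigma>. \<sigma> permutes {1..n} \<and> (fix_pts n \<sigma>, exc n \<sigma>, maf n \<sigma>) = (a, b, c)}"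
    unfolding e1 e2 .
  then show ?thesis using part2 by simp
qed

theorem corollary1p5:
  fixes n :: nat
  shows "(\<forall>a b c :: nat.
            card {\<sigma>. \<sigma> permutes {1..n} \<and> (fix_pts n \<sigma>, dez n \<sigma>, maz n \<sigma>) = (a, b, c)}
          = card {\<sigma>. \<sigma> permutes {1..n} \<and> (fix_pts n \<sigma>, des (pword n \<sigma>), maj (pword n \<sigma>)) = (a, b, c)})
       \<and> (\<forall>a b c :: nat.
            card {\<sigma>. \<sigma> permutes {1..n} \<and> (fix_pts n \<sigma>, exc n \<sigma>, maz n \<sigma>) = (a, b, c)}
          = card {\<sigma>. \<sigma> permutes {1..n} \<and> (fix_pts n \<sigma>, exc n \<sigma>, maj (pword n \<sigma>)) = (a, b, c)})
       \<and> (\<forall>a b c :: nat.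
            card {\<sigma>. \<sigma> permutes {1..n} \<and> (fix_pts n \<sigma>, exc n \<sigma>, maj (pword n \<sigma>)) = (a, b, c)}
          = card {\<sigma>. \<sigma> permutes {1..n} \<and> (fix_pts n \<sigma>, exc n \<sigma>, maf n \<sigma>) = (a, b, c)})"
  using part1 part2 part3 by blast

end
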